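(* The map $V\mapsto Z_V$ induces a bijection between the set of isomorphism (equivalence) classes of Whittaker modules of type $\eta$ over $R$ and the set of ideals of the center $Z(R)$.
   Context: Let $f\in\mathbb{C}[H]$ be a polynomial. $R=R(f)$ is the associative $\mathbb{C}$-algebra generated by $E,F,H$ with relations $EF-FE=f(H)$, $HE-EH=E$, $HF-FH=-F$. Let $R(E)=\mathbb{C}[E]$ be the subalgebra generated by $E$. Let $u\in\mathbb{C}[H]$ satisfy $f(H)=\tfrac12(u(H+1)-u(H))$ and $\Omega=2FE+u(H+1)$; the center $Z(R)$ is the polynomial ring $\mathbb{C}[\Omega]$. Fix an algebra homomorphism $\eta:R(E)\to\mathbb{C}$ with $\eta(E)\neq 0$. A vector $v$ of an $R$-module $V$ is a Whittaker vector (of type $\eta$) if $Ev=\eta(E)v$; $V$ is a Whittaker module of type $\eta$ if $V=Rv$ for some Whittaker vector $v$. For an $R$-module $V$, $Z_V=\mathrm{Ann}_R(V)\cap Z(R)$. *)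

theory Defs
  imports "HOL-Computational_Algebra.Polynomial"
begin

text \<open>An R(f)-module is modelled as a C-subspace M of an ambient C-vector space
  (scalar multiplication sc), with three C-linear operators e, f, h on M (actions
  of E, F, H) satisfying the defining relations of R(f).\<close>

definition op_poly :: "(complex \<Rightarrow> 'v::ab_group_add \<Rightarrow> 'v) \<Rightarrow> complex poly \<Rightarrow> ('v \<Rightarrow> 'v) \<Rightarrow> 'v \<Rightarrow> 'v" where
  "op_poly sc p T x = (\<Sum>i\<le>degree p. sc (coeff p i) ((T ^^ i) x))"

definition lin_on :: "(complex \<Rightarrow> 'v::ab_group_add \<Rightarrow> 'v) \<Rightarrow> 'v set \<Rightarrow> ('v \<Rightarrow> 'v) \<Rightarrow> bool" where
  "lin_on sc M T \<longleftrightarrow> (\<forall>x\<in>M. T x \<in> M) \<and> (\<forall>x\<in>M. \<forall>y\<in>M. T (x + y) = T x + T y)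
     \<and> (\<forall>c. \<forall>x\<in>M. T (sc c x) = sc c (T x))"

definition R_module :: "complex poly \<Rightarrow> (complex \<Rightarrow> 'v::ab_group_add \<Rightarrow> 'v) \<Rightarrow> 'v set
    \<Rightarrow> ('v \<Rightarrow> 'v) \<Rightarrow> ('v \<Rightarrow> 'v) \<Rightarrow> ('v \<Rightarrow> 'v) \<Rightarrow> bool" where
  "R_module fp sc M e f h \<longleftrightarrow> vector_space sc \<and> module.subspace sc M
     \<and> lin_on sc M e \<and> lin_on sc M f \<and> lin_on sc M h
     \<and> (\<forall>x\<in>M. e (f x) - f (e x) = op_poly sc fp h x)
     \<and> (\<forall>x\<in>M. h (e x) - e (h x) = e x)
     \<and> (\<forall>x\<in>M. h (f x) - f (h x) = - f x)"

definition submod_gen :: "(complex \<Rightarrow> 'v::ab_group_add \<Rightarrow> 'v) \<Rightarrow> ('v \<Rightarrow> 'v) \<Rightarrow> ('v \<Rightarrow> 'v)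
    \<Rightarrow> ('v \<Rightarrow> 'v) \<Rightarrow> 'v \<Rightarrow> 'v set" where
  "submod_gen sc e f h v = \<Inter>{N. module.subspace sc N \<and> v \<in> N
      \<and> (\<forall>x\<in>N. e x \<in> N \<and> f x \<in> N \<and> h x \<in> N)}"

text \<open>Whittaker module of type eta, where eta is the value eta(E) (nonzero).\<close>
definition whittaker :: "complex poly \<Rightarrow> complex \<Rightarrow> (complex \<Rightarrow> 'v::ab_group_add \<Rightarrow> 'v) \<Rightarrow> 'v set
    \<Rightarrow> ('v \<Rightarrow> 'v) \<Rightarrow> ('v \<Rightarrow> 'v) \<Rightarrow> ('v \<Rightarrow> 'v) \<Rightarrow> bool" where
  "whittaker fp eta sc M e f h \<longleftrightarrow> R_module fp sc M e f h
     \<and> (\<exists>v\<in>M. e v = sc eta v \<and> M = submod_gen sc e f h v)"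

definition omega_op :: "complex poly \<Rightarrow> (complex \<Rightarrow> 'v::ab_group_add \<Rightarrow> 'v)
    \<Rightarrow> ('v \<Rightarrow> 'v) \<Rightarrow> ('v \<Rightarrow> 'v) \<Rightarrow> ('v \<Rightarrow> 'v) \<Rightarrow> 'v \<Rightarrow> 'v" where
  "omega_op u sc e f h x = sc 2 (f (e x)) + op_poly sc (pcompose u [:1, 1:]) h x"

text \<open>Z_V, identified with an ideal of C[x] via Z(R) = C[Omega]:
  the polynomials p such that p(Omega) annihilates V.\<close>
definition ZV :: "complex poly \<Rightarrow> (complex \<Rightarrow> 'v::ab_group_add \<Rightarrow> 'v) \<Rightarrow> 'v set
    \<Rightarrow> ('v \<Rightarrow> 'v) \<Rightarrow> ('v \<Rightarrow> 'v) \<Rightarrow> ('v \<Rightarrow> 'v) \<Rightarrow> complex poly set" where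
  "ZV u sc M e f h = {p. \<forall>x\<in>M. op_poly sc p (omega_op u sc e f h) x = 0}"

definition is_ideal :: "complex poly set \<Rightarrow> bool" where
  "is_ideal I \<longleftrightarrow> 0 \<in> I \<and> (\<forall>a\<in>I. \<forall>b\<in>I. a + b \<in> I) \<and> (\<forall>a\<in>I. \<forall>r. r * a \<in> I)"

definition R_iso :: "(complex \<Rightarrow> 'a::ab_group_add \<Rightarrow> 'a) \<Rightarrow> 'a set \<Rightarrow> ('a \<Rightarrow> 'a) \<Rightarrow> ('a \<Rightarrow> 'a) \<Rightarrow> ('a \<Rightarrow> 'a)
   \<Rightarrow> (complex \<Rightarrow> 'b::ab_group_add \<Rightarrow> 'b) \<Rightarrow> 'b set \<Rightarrow> ('b \<Rightarrow> 'b) \<Rightarrow> ('b \<Rightarrow> 'b) \<Rightarrow> ('b \<Rightarrow> 'b) \<Rightarrow> bool" where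
  "R_iso sc1 M1 e1 f1 h1 sc2 M2 e2 f2 h2 \<longleftrightarrow> (\<exists>\<phi>. bij_betw \<phi> M1 M2
     \<and> (\<forall>x\<in>M1. \<forall>y\<in>M1. \<phi> (x + y) = \<phi> x + \<phi> y)
     \<and> (\<forall>c. \<forall>x\<in>M1. \<phi> (sc1 c x) = sc2 c (\<phi> x))
     \<and> (\<forall>x\<in>M1. \<phi> (e1 x) = e2 (\<phi> x) \<and> \<phi> (f1 x) = f2 (\<phi> x) \<and> \<phi> (h1 x) = h2 (\<phi> x)))"

end

theory Submission
  imports Defs "HOL-Library.Product_Plus" "HOL-Library.Nat_Bijection"
begin


locale vsp = vector_space sc for sc :: "complex \<Rightarrow> 'v::ab_group_add \<Rightarrow> 'v"
begin

lemma lin_zero: "lin_on sc M T \<Longrightarrow> subspace M \<Longrightarrow> T 0 = 0"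
  unfolding lin_on_def using subspace_0[of M]
  by (metis add_cancel_right_right add_0)

lemma lin_funpow_in: "lin_on sc M T \<Longrightarrow> x \<in> M \<Longrightarrow> (T ^^ i) x \<in> M"
  by (induction i) (auto simp: lin_on_def)

lemma lin_sum: assumes "lin_on sc M T" "subspace M" "\<And>i. i \<in> A \<Longrightarrow> y i \<in> M"
  shows "T (\<Sum>i\<in>A. y i) = (\<Sum>i\<in>A. T (y i))"
  using assms(3)
proof (induction A rule: infinite_finite_induct)
  case (infinite A) then show ?case using lin_zero[OF assms(1,2)] by simp
next
  case empty then show ?case using lin_zero[OF assms(1,2)] by simp
next
  case (insert x F)
  have "(\<Sum>i\<in>F. y i) \<in> M" using insert by (intro subspace_sum[OF assms(2)]) auto
  then show ?case using insert assms(1) unfolding lin_on_def by simp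
qed

lemma op_poly_upto: assumes "degree p < n"
  shows "op_poly sc p T x = (\<Sum>i<n. sc (coeff p i) ((T ^^ i) x))"
proof -
  have "op_poly sc p T x = (\<Sum>i\<in>{..degree p}. sc (coeff p i) ((T ^^ i) x))"
    by (simp add: op_poly_def)
  also have "\<dots> = (\<Sum>i<n. sc (coeff p i) ((T ^^ i) x))"
    using assms by (intro sum.mono_neutral_left) (auto simp: coeff_eq_0)
  finally show ?thesis .
qed

lemma op_poly_in: assumes "subspace N" "\<And>y. y \<in> N \<Longrightarrow> T y \<in> N" "x \<in> N"
  shows "op_poly sc p T x \<in> N"
proof -
  have "(T ^^ i) x \<in> N" for i by (induction i) (use assms in auto)
  then show ?thesis unfolding op_poly_def by (intro subspace_sum[OF assms(1)] subspace_scale[OF assms(1)])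
qed

lemma op_poly_pCons: assumes "lin_on sc M T" "subspace M" "x \<in> M"
  shows "op_poly sc (pCons a p) T x = sc a x + T (op_poly sc p T x)"
proof -
  define n where "n = Suc (degree p)"
  have d1: "degree (pCons a p) < Suc n" unfolding n_def by (simp add: degree_pCons_le le_imp_less_Suc)
  have d2: "degree p < n" unfolding n_def by simp
  have "op_poly sc (pCons a p) T x = (\<Sum>i<Suc n. sc (coeff (pCons a p) i) ((T ^^ i) x))"
    by (rule op_poly_upto[OF d1])
  also have "\<dots> = sc a x + (\<Sum>i<n. sc (coeff p i) (T ((T ^^ i) x)))"
    by (subst sum.lessThan_Suc_shift) simp
  also have "(\<Sum>i<n. sc (coeff p i) (T ((T ^^ i) x))) = (\<Sum>i<n. T (sc (coeff p i) ((T ^^ i) x)))"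
    using assms lin_funpow_in[OF assms(1,3)] unfolding lin_on_def by simp
  also have "\<dots> = T (\<Sum>i<n. sc (coeff p i) ((T ^^ i) x))"
    by (rule lin_sum[symmetric, OF assms(1,2)]) (use lin_funpow_in[OF assms(1,3)] assms(2) subspace_scale in auto)
  also have "(\<Sum>i<n. sc (coeff p i) ((T ^^ i) x)) = op_poly sc p T x"
    by (rule op_poly_upto[OF d2, symmetric])
  finally show ?thesis .
qed

lemma op_poly_0[simp]: "op_poly sc 0 T x = 0"
  by (simp add: op_poly_def)

lemma op_poly_const[simp]: "op_poly sc [:c:] T x = sc c x"
  by (simp add: op_poly_def)

lemma op_poly_add: "op_poly sc (p + q) T x = op_poly sc p T x + op_poly sc q T x"
proof -
  define n where "n = Suc (max (degree p) (degree q))"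
  have "degree (p+q) < n" "degree p < n" "degree q < n"
    using degree_add_le_max[of p q] by (auto simp: n_def)
  then show ?thesis
    by (simp add: op_poly_upto[of _ n] scale_left_distrib sum.distrib)
qed

lemma op_poly_diff: "op_poly sc (p - q) T x = op_poly sc p T x - op_poly sc q T x"
proof -
  define n where "n = Suc (max (degree p) (degree q))"
  have "degree (p-q) < n" "degree p < n" "degree q < n"
    using degree_diff_le_max[of p q] by (auto simp: n_def)
  then show ?thesis
    by (simp add: op_poly_upto[of _ n] scale_left_diff_distrib sum_subtractf)
qed

lemma op_poly_smult: "op_poly sc (smult c p) T x = sc c (op_poly sc p T x)"
proof -
  define n where "n = Suc (degree p)"
  have "degree (smult c p) < n" "degree p < n"
    by (auto simp: n_def)
  then show ?thesis
    by (simp add: op_poly_upto[of _ n] scale_sum_right)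
qed

lemma op_poly_lin: assumes "lin_on sc M T" "subspace M"
  shows "lin_on sc M (op_poly sc p T)"
proof -
  have i: "op_poly sc q T x \<in> M" if "x \<in> M" for x q
    using op_poly_in[OF assms(2)] assms(1) that unfolding lin_on_def by blast
  have A: "\<forall>x\<in>M. \<forall>y\<in>M. op_poly sc p T (x + y) = op_poly sc p T x + op_poly sc p T y"
  proof (induction p)
    case 0 show ?case by simp
  next
    case (pCons a p) then show ?case 
      using assms op_poly_pCons[OF assms] i subspace_add[OF assms(2)]
      unfolding lin_on_def by (simp add: scale_right_distrib)
  qed
  have B: "\<forall>c. \<forall>x\<in>M. op_poly sc p T (sc c x) = sc c (op_poly sc p T x)"
  proof (induction p)
    case 0 show ?case by simp
  next
    case (pCons a p) 
    show ?case using pCons assms op_poly_pCons[OF assms] i subspace_scale[OF assms(2)]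
      unfolding lin_on_def by (simp add: scale_right_distrib scale_left_commute)
  qed
  show ?thesis using A B i unfolding lin_on_def by blast
qed

lemma op_poly_in': "lin_on sc M T \<Longrightarrow> subspace M \<Longrightarrow> x \<in> M \<Longrightarrow> op_poly sc p T x \<in> M"
  using op_poly_in[of M T x p] unfolding lin_on_def by blast

lemma op_poly_mult: assumes "lin_on sc M T" "subspace M" "x \<in> M"
  shows "op_poly sc (p * q) T x = op_poly sc p T (op_poly sc q T x)"
proof (induction p)
  case 0 then show ?case by simp
next
  case (pCons a p)
  have "op_poly sc (pCons a p * q) T x = sc a (op_poly sc q T x) + T (op_poly sc (p * q) T x)"
    by (simp add: op_poly_add op_poly_smult op_poly_pCons[OF assms] lin_zero[OF assms(1,2)])
  then show ?case using pCons op_poly_pCons[OF assms(1,2) op_poly_in'[OF assms]] by simp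
qed

lemma op_poly_comm: assumes "lin_on sc M T" "lin_on sc M S" "subspace M" "x \<in> M"
   "\<And>y. y \<in> M \<Longrightarrow> S (T y) = T (S y)"
  shows "S (op_poly sc p T x) = op_poly sc p T (S x)"
proof (induction p)
  case 0 then show ?case using lin_zero[OF assms(2,3)] by simp
next
  case (pCons a p)
  have i: "op_poly sc p T x \<in> M" "S x \<in> M" using op_poly_in'[OF assms(1,3,4)] assms(2,4) unfolding lin_on_def by auto
  have "T (op_poly sc p T x) \<in> M" using i assms(1) unfolding lin_on_def by auto
  then show ?case using pCons op_poly_pCons[OF assms(1,3,4)] op_poly_pCons[OF assms(1,3) i(2)]
      assms(2,4,5) i subspace_scale[OF assms(3)] unfolding lin_on_def by simp
qed

lemma op_poly_zero: "lin_on sc M T \<Longrightarrow> subspace M \<Longrightarrow> op_poly sc p T 0 = 0"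
  using lin_zero[OF op_poly_lin] by blast

end

definition opb :: "(complex \<Rightarrow> 'v::ab_group_add \<Rightarrow> 'v) \<Rightarrow> ('v \<Rightarrow> 'v) \<Rightarrow> ('v \<Rightarrow> 'v) \<Rightarrow> complex poly poly \<Rightarrow> 'v \<Rightarrow> 'v" where
  "opb sc W T P x = (\<Sum>i\<le>degree P. (T ^^ i) (op_poly sc (coeff P i) W x))"

context vsp begin

lemma lin_diff: "lin_on sc M T \<Longrightarrow> subspace M \<Longrightarrow> x \<in> M \<Longrightarrow> y \<in> M \<Longrightarrow> T (x - y) = T x - T y"
  unfolding lin_on_def
  by (metis (no_types, lifting) add_diff_cancel diff_add_cancel subspace_diff)

lemma lin_funpow: assumes "lin_on sc M T" "subspace M" shows "lin_on sc M (T ^^ i)"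
  by (induction i) (use assms in \<open>auto simp: lin_on_def\<close>)

end

locale vsp2 = vsp sc for sc :: "complex \<Rightarrow> 'v::ab_group_add \<Rightarrow> 'v" +
  fixes M W T
  assumes sub: "subspace M" and linW: "lin_on sc M W" and linT: "lin_on sc M T"
    and commWT: "\<And>y. y \<in> M \<Longrightarrow> W (T y) = T (W y)"
begin

abbreviation "ob \<equiv> opb sc W T"

lemma opW_in: "x \<in> M \<Longrightarrow> op_poly sc p W x \<in> M" by (rule op_poly_in'[OF linW sub])
lemma T_in: "x \<in> M \<Longrightarrow> T x \<in> M" using linT unfolding lin_on_def by blast
lemma W_in: "x \<in> M \<Longrightarrow> W x \<in> M" using linW unfolding lin_on_def by blast
lemma Tp_in: "x \<in> M \<Longrightarrow> (T ^^ i) x \<in> M" by (rule lin_funpow_in[OF linT])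
lemma Tp_zero: "(T ^^ i) 0 = 0" using lin_zero[OF lin_funpow[OF linT sub] sub] .
lemma T_add: "x \<in> M \<Longrightarrow> y \<in> M \<Longrightarrow> T (x + y) = T x + T y" using linT unfolding lin_on_def by blast
lemma T_sc: "x \<in> M \<Longrightarrow> T (sc c x) = sc c (T x)" using linT unfolding lin_on_def by blast

lemma opb_upto: assumes "degree P < n"
  shows "ob P x = (\<Sum>i<n. (T ^^ i) (op_poly sc (coeff P i) W x))"
proof -
  have "ob P x = (\<Sum>i\<in>{..degree P}. (T ^^ i) (op_poly sc (coeff P i) W x))"
    by (simp add: opb_def)
  also have "\<dots> = (\<Sum>i<n. (T ^^ i) (op_poly sc (coeff P i) W x))"
    using assms by (intro sum.mono_neutral_left) (auto simp: coeff_eq_0 Tp_zero)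
  finally show ?thesis .
qed

lemma opb_in: "x \<in> M \<Longrightarrow> ob P x \<in> M"
  unfolding opb_def by (intro subspace_sum[OF sub]) (simp add: Tp_in opW_in)

lemma opb_pCons: assumes "x \<in> M"
  shows "ob (pCons a P) x = op_poly sc a W x + T (ob P x)"
proof -
  define n where "n = Suc (degree P)"
  have d1: "degree (pCons a P) < Suc n" unfolding n_def by (simp add: degree_pCons_le le_imp_less_Suc)
  have d2: "degree P < n" unfolding n_def by simp
  have "ob (pCons a P) x = (\<Sum>i<Suc n. (T ^^ i) (op_poly sc (coeff (pCons a P) i) W x))"
    by (rule opb_upto[OF d1])
  also have "\<dots> = op_poly sc a W x + (\<Sum>i<n. T ((T ^^ i) (op_poly sc (coeff P i) W x)))"
    by (subst sum.lessThan_Suc_shift) (simp add: funpow_swap1)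
  also have "(\<Sum>i<n. T ((T ^^ i) (op_poly sc (coeff P i) W x))) = T (ob P x)"
  proof -
    have "T (\<Sum>i<n. (T ^^ i) (op_poly sc (coeff P i) W x)) = (\<Sum>i<n. T ((T ^^ i) (op_poly sc (coeff P i) W x)))"
      by (rule lin_sum[OF linT sub]) (auto simp: Tp_in opW_in assms)
    then show ?thesis by (simp add: opb_upto[OF d2])
  qed
  finally show ?thesis .
qed

lemma opb_0[simp]: "ob 0 x = 0" by (simp add: opb_def)
lemma opb_const: "ob [:a:] x = op_poly sc a W x" by (simp add: opb_def)

lemma opb_add: assumes "x \<in> M" shows "ob (P + Q) x = ob P x + ob Q x"
proof -
  define n where "n = Suc (max (degree P) (degree Q))"
  have "degree (P+Q) < n" "degree P < n" "degree Q < n"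
    using degree_add_le_max[of P Q] by (auto simp: n_def)
  then show ?thesis
    using lin_funpow[OF linT sub] assms opW_in
    by (simp add: opb_upto[of _ n] op_poly_add sum.distrib lin_on_def)
qed

lemma opb_diff: assumes "x \<in> M" shows "ob (P - Q) x = ob P x - ob Q x"
proof -
  define n where "n = Suc (max (degree P) (degree Q))"
  have "degree (P-Q) < n" "degree P < n" "degree Q < n"
    using degree_diff_le_max[of P Q] by (auto simp: n_def)
  then show ?thesis
    using lin_diff[OF lin_funpow[OF linT sub] sub] assms opW_in
    by (simp add: opb_upto[of _ n] op_poly_diff sum_subtractf)
qed

lemma opW_T: "x \<in> M \<Longrightarrow> op_poly sc a W (T x) = T (op_poly sc a W x)"
  using op_poly_comm[OF linW linT sub, of x] commWT by simp

lemma opb_smult: assumes "x \<in> M" shows "ob (smult a P) x = op_poly sc a W (ob P x)"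
proof (induction P)
  case 0 then show ?case using op_poly_zero[OF linW sub] by simp
next
  case (pCons b P)
  have "ob (smult a (pCons b P)) x = op_poly sc a W (op_poly sc b W x) + T (op_poly sc a W (ob P x))"
    using pCons assms by (simp add: opb_pCons op_poly_mult[OF linW sub])
  also have "\<dots> = op_poly sc a W (op_poly sc b W x + T (ob P x))"
    using op_poly_lin[OF linW sub, of a] opW_T opb_in assms opW_in T_in unfolding lin_on_def by simp
  finally show ?case using assms by (simp add: opb_pCons)
qed

lemma opb_smult_c: assumes "x \<in> M" shows "ob (smult [:c:] P) x = sc c (ob P x)"
  using opb_smult[OF assms] by simp

lemma opb_pCons0: "x \<in> M \<Longrightarrow> ob (pCons 0 P) x = T (ob P x)"
  by (simp add: opb_pCons)

lemma opb_mult: assumes "x \<in> M" shows "ob (P * Q) x = ob P (ob Q x)"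
proof (induction P)
  case 0 then show ?case by simp
next
  case (pCons a P)
  have "ob (pCons a P * Q) x = op_poly sc a W (ob Q x) + T (ob (P * Q) x)"
    using assms by (simp add: opb_add opb_smult opb_pCons0)
  then show ?case using pCons opb_pCons[OF opb_in[OF assms]] by simp
qed

lemma opb_monom: "x \<in> M \<Longrightarrow> ob (monom c n) x = (T ^^ n) (op_poly sc c W x)"
  by (induction n) (simp_all add: monom_0 monom_Suc opb_pCons0 opb_const)

lemma opb_lift: "x \<in> M \<Longrightarrow> ob (map_poly (\<lambda>a. [:a:]) q) x = op_poly sc q T x"
proof (induction q)
  case 0 then show ?case by simp
next
  case (pCons a q) then show ?case
    by (simp add: map_poly_pCons opb_pCons op_poly_pCons[OF linT sub])
qed

lemma opb_zero_coeffs: "(\<And>k. op_poly sc (coeff P k) W x = 0) \<Longrightarrow> ob P x = 0"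
  by (simp add: opb_def Tp_zero)

lemma opb_sc: assumes "x \<in> M" shows "ob P (sc c x) = sc c (ob P x)"
proof -
  have "ob P (sc c x) = ob P (ob [:[:c:]:] x)" by (simp add: opb_const)
  also have "\<dots> = ob (smult [:c:] P) x" using assms by (simp add: opb_mult[symmetric])
  finally show ?thesis using opb_smult_c[OF assms] by simp
qed

lemma opb_1: "x \<in> M \<Longrightarrow> ob 1 x = x" 
  using opb_const[of 1 x] by (simp add: one_pCons scale_one)

end


lemma coeff_lin_pow_pred: "coeff ([:a, 1:] ^ Suc m) m = of_nat (Suc m) * (a::'a::comm_ring_1)"
proof (induction m)
  case 0 then show ?case by simp
next
  case (Suc m)
  have "[:a, 1:] ^ Suc (Suc m) = smult a ([:a, 1:] ^ Suc m) + pCons 0 ([:a, 1:] ^ Suc m)"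
    by (subst power_Suc) (simp add: mult_pCons_left del: power_Suc)
  then show ?case using Suc coeff_linear_power[of a "Suc m"]
    by (simp del: power_Suc add: algebra_simps)
qed

lemma pcompose_xpow: "pcompose ([:0, 1:] ^ k) q = q ^ k"
  by (induction k) (simp_all add: pcompose_mult pcompose_1 pcompose_pCons)

lemma shift_poly_fact:
  fixes P :: "'a::idom poly"
  assumes "degree P = Suc m"
  defines "Q \<equiv> pcompose P [:-1, 1:] - P"
  shows "degree Q \<le> m" "coeff Q m = - (of_nat (Suc m) * lead_coeff P)"
proof -
  define c where "c = lead_coeff P"
  define P0 where "P0 = P - monom c (Suc m)"
  have dP0: "degree P0 \<le> m"
  proof (rule degree_le, intro allI impI)
    fix i assume "m < i"
    then show "coeff P0 i = 0" using assms(1) 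
      by (cases "i = Suc m") (auto simp: P0_def c_def coeff_monom coeff_eq_0)
  qed
  have P: "P = monom c (Suc m) + P0" by (simp add: P0_def)
  have pm: "pcompose (monom c (Suc m)) [:-1, 1:] = smult c ([:-1, 1:] ^ Suc m)"
    by (simp only: monom_altdef pcompose_smult pcompose_xpow)
  have d0: "degree (pcompose P0 [:-1, 1:]) \<le> m" using dP0 by (simp add: degree_pcompose)
  have c0: "coeff (pcompose P0 [:-1, 1:]) m = coeff P0 m"
  proof (cases "degree P0 = m")
    case True
    then show ?thesis using lead_coeff_comp[of "[:-1, 1:]" P0] by (simp add: degree_pcompose)
  next
    case False
    then have "degree P0 < m" using dP0 by simp
    then show ?thesis by (simp add: coeff_eq_0 degree_pcompose)
  qed
  have Qe: "Q = smult c ([:-1, 1:] ^ Suc m) - monom c (Suc m) + (pcompose P0 [:-1, 1:] - P0)"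
    unfolding Q_def by (subst (1 2) P) (simp add: pcompose_add pm)
  have dpow: "degree ([:-1, 1:] ^ Suc m :: 'a poly) \<le> Suc m"
    by (rule order.trans[OF degree_power_le]) simp
  show "degree Q \<le> m"
  proof (rule degree_le, intro allI impI)
    fix i assume "m < i"
    then consider "i = Suc m" | "i > Suc m" by linarith
    then show "coeff Q i = 0"
    proof cases
      case 1 then show ?thesis using d0 dP0 coeff_linear_power[of "-1::'a" "Suc m"]
        by (simp add: Qe coeff_eq_0 del: power_Suc)
    next
      case 2 then show ?thesis using d0 dP0 dpow
        by (simp add: Qe coeff_eq_0 coeff_monom del: power_Suc)
    qed
  qed
  show "coeff Q m = - (of_nat (Suc m) * lead_coeff P)"
  proof -
    have k: "coeff ([:-1, 1:] ^ Suc m) m = - (of_nat (Suc m) :: 'a)"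
      using coeff_lin_pow_pred[of "-1::'a" m] by (simp del: power_Suc of_nat_Suc)
    show ?thesis using c0 by (simp add: Qe c_def coeff_monom k del: power_Suc of_nat_Suc)
  qed
qed


locale rmod = vsp sc for sc :: "complex \<Rightarrow> 'v::ab_group_add \<Rightarrow> 'v" +
  fixes fp u :: "complex poly" and M e f h
  assumes Rm: "R_module fp sc M e f h" and fpu: "fp = smult (1/2) (pcompose u [:1,1:] - u)"
begin

abbreviation "Om \<equiv> omega_op u sc e f h"
abbreviation "U \<equiv> pcompose u [:1,1:]"

lemma sub: "subspace M" using Rm unfolding R_module_def by blast
lemma linE: "lin_on sc M e" using Rm unfolding R_module_def by blast
lemma linF: "lin_on sc M f" using Rm unfolding R_module_def by blast
lemma linH: "lin_on sc M h" using Rm unfolding R_module_def by blast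
lemma rel1: "x \<in> M \<Longrightarrow> e (f x) - f (e x) = op_poly sc fp h x" using Rm unfolding R_module_def by blast
lemma rel2: "x \<in> M \<Longrightarrow> h (e x) - e (h x) = e x" using Rm unfolding R_module_def by blast
lemma rel3: "x \<in> M \<Longrightarrow> h (f x) - f (h x) = - f x" using Rm unfolding R_module_def by blast

lemma e_in: "x \<in> M \<Longrightarrow> e x \<in> M" using linE unfolding lin_on_def by blast
lemma f_in: "x \<in> M \<Longrightarrow> f x \<in> M" using linF unfolding lin_on_def by blast
lemma h_in: "x \<in> M \<Longrightarrow> h x \<in> M" using linH unfolding lin_on_def by blast
lemma e_add: "x \<in> M \<Longrightarrow> y \<in> M \<Longrightarrow> e (x + y) = e x + e y" using linE unfolding lin_on_def by blast
lemma f_add: "x \<in> M \<Longrightarrow> y \<in> M \<Longrightarrow> f (x + y) = f x + f y" using linF unfolding lin_on_def by blast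
lemma h_add: "x \<in> M \<Longrightarrow> y \<in> M \<Longrightarrow> h (x + y) = h x + h y" using linH unfolding lin_on_def by blast
lemma e_sc: "x \<in> M \<Longrightarrow> e (sc c x) = sc c (e x)" using linE unfolding lin_on_def by blast
lemma f_sc: "x \<in> M \<Longrightarrow> f (sc c x) = sc c (f x)" using linF unfolding lin_on_def by blast
lemma h_sc: "x \<in> M \<Longrightarrow> h (sc c x) = sc c (h x)" using linH unfolding lin_on_def by blast
lemma e_diff: "x \<in> M \<Longrightarrow> y \<in> M \<Longrightarrow> e (x - y) = e x - e y" by (rule lin_diff[OF linE sub])
lemma f_diff: "x \<in> M \<Longrightarrow> y \<in> M \<Longrightarrow> f (x - y) = f x - f y" by (rule lin_diff[OF linF sub])
lemma h_diff: "x \<in> M \<Longrightarrow> y \<in> M \<Longrightarrow> h (x - y) = h x - h y" by (rule lin_diff[OF linH sub])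
lemma oph_in: "x \<in> M \<Longrightarrow> op_poly sc p h x \<in> M" by (rule op_poly_in'[OF linH sub])

lemma e_h: "x \<in> M \<Longrightarrow> e (h x) = h (e x) - e x" using rel2[of x] by (simp add: algebra_simps)
lemma f_h: "x \<in> M \<Longrightarrow> f (h x) = h (f x) + f x" using rel3[of x] by (simp add: algebra_simps)

lemma sc_m1: "sc (-1) z = - z" by (simp add: scale_minus_left)

lemma e_poly: "x \<in> M \<Longrightarrow> e (op_poly sc q h x) = op_poly sc (pcompose q [:-1,1:]) h (e x)"
proof (induction q)
  case 0 then show ?case using lin_zero[OF linE sub] by simp
next
  case (pCons a q)
  define y where "y = op_poly sc q h x"
  have y: "y \<in> M" using pCons oph_in by (simp add: y_def)
  define z where "z = op_poly sc (pcompose q [:-1,1:]) h (e x)"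
  have z: "z \<in> M" using pCons oph_in e_in by (simp add: z_def)
  have "e (op_poly sc (pCons a q) h x) = sc a (e x) + (h (e y) - e y)"
    using pCons y by (simp add: op_poly_pCons[OF linH sub] e_add e_sc e_h subspace_scale[OF sub] h_in y_def)
  also have "\<dots> = op_poly sc (pcompose (pCons a q) [:-1,1:]) h (e x)"
    using pCons z e_in by (simp add: pcompose_pCons op_poly_add op_poly_mult[OF linH sub] y_def z_def[symmetric]
        op_poly_pCons[OF linH sub] sc_m1 scale_one op_poly_diff oph_in)
  finally show ?case .
qed

lemma f_poly: "x \<in> M \<Longrightarrow> f (op_poly sc q h x) = op_poly sc (pcompose q [:1,1:]) h (f x)"
proof (induction q)
  case 0 then show ?case using lin_zero[OF linF sub] by simp
next
  case (pCons a q)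
  define y where "y = op_poly sc q h x"
  have y: "y \<in> M" using pCons oph_in by (simp add: y_def)
  define z where "z = op_poly sc (pcompose q [:1,1:]) h (f x)"
  have z: "z \<in> M" using pCons oph_in f_in by (simp add: z_def)
  have "f (op_poly sc (pCons a q) h x) = sc a (f x) + (h (f y) + f y)"
    using pCons y by (simp add: op_poly_pCons[OF linH sub] f_add f_sc f_h subspace_scale[OF sub] h_in y_def)
  also have "\<dots> = op_poly sc (pcompose (pCons a q) [:1,1:]) h (f x)"
    using pCons z f_in by (simp add: pcompose_pCons op_poly_add op_poly_mult[OF linH sub] y_def z_def[symmetric]
        op_poly_pCons[OF linH sub] scale_one algebra_simps)
  finally show ?case .
qed

lemma Om_in: "x \<in> M \<Longrightarrow> Om x \<in> M"
  unfolding omega_op_def by (intro subspace_add[OF sub] subspace_scale[OF sub] f_in e_in oph_in)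

lemma Om_lin: "lin_on sc M Om"
proof -
  have "Om (x + y) = Om x + Om y" if "x \<in> M" "y \<in> M" for x y
    using that op_poly_lin[OF linH sub, of U] e_in
    by (simp add: omega_op_def e_add f_add scale_right_distrib lin_on_def algebra_simps)
  moreover have "Om (sc c x) = sc c (Om x)" if "x \<in> M" for x c
    using that op_poly_lin[OF linH sub, of U] e_in
    by (simp add: omega_op_def e_sc f_sc scale_right_distrib lin_on_def scale_left_commute)
  ultimately show ?thesis using Om_in unfolding lin_on_def by blast
qed

lemma U_rel: "y \<in> M \<Longrightarrow> sc 2 (op_poly sc fp h y) + op_poly sc u h y = op_poly sc U h y"
  by (simp add: fpu op_poly_smult op_poly_diff)

lemma Om_e: "x \<in> M \<Longrightarrow> e (Om x) = Om (e x)"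
proof -
  assume x: "x \<in> M"
  have "e (Om x) = sc 2 (e (f (e x))) + op_poly sc u h (e x)"
    using x by (simp add: omega_op_def e_add e_sc f_in e_in oph_in subspace_scale[OF sub] e_poly
      pcompose_assoc[symmetric] pcompose_pCons)
  also have "e (f (e x)) = f (e (e x)) + op_poly sc fp h (e x)" using rel1[of "e x"] x e_in
    by (simp add: algebra_simps)
  finally show ?thesis using x e_in U_rel[of "e x"] f_in oph_in
    by (simp add: omega_op_def scale_right_distrib algebra_simps)
qed

lemma Om_h: "x \<in> M \<Longrightarrow> h (Om x) = Om (h x)"
proof -
  assume x: "x \<in> M"
  have hf: "h (f (e x)) = f (e (h x))"
    using x rel3[of "e x"] rel2[of x] e_in h_in f_in by (simp add: algebra_simps f_add)
  have "h (op_poly sc U h x) = op_poly sc U h (h x)"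
    using op_poly_comm[OF linH linH sub x] by simp
  then show ?thesis using x hf 
    by (simp add: omega_op_def h_add h_sc f_in e_in oph_in subspace_scale[OF sub])
qed

lemma Om_f: "x \<in> M \<Longrightarrow> f (Om x) = Om (f x)"
proof -
  assume x: "x \<in> M"
  have fpc: "pcompose fp [:1,1:] = smult (1/2) (pcompose U [:1,1:] - U)"
    by (simp add: fpu pcompose_smult pcompose_diff)
  have "f (Om x) = sc 2 (f (f (e x))) + op_poly sc (pcompose U [:1,1:]) h (f x)"
    using x by (simp add: omega_op_def f_add f_sc f_in e_in oph_in subspace_scale[OF sub] f_poly)
  moreover have "Om (f x) = sc 2 (f (f (e x))) + sc 2 (f (op_poly sc fp h x)) + op_poly sc U h (f x)"
  proof -
    have "e (f x) = f (e x) + op_poly sc fp h x" using rel1[OF x] by (simp add: algebra_simps)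
    then show ?thesis using x by (simp add: omega_op_def f_add f_in e_in oph_in scale_right_distrib)
  qed
  moreover have "sc 2 (f (op_poly sc fp h x)) + op_poly sc U h (f x) = op_poly sc (pcompose U [:1,1:]) h (f x)"
    using x by (simp add: f_poly fpc op_poly_smult op_poly_diff)
  ultimately show ?thesis by (simp add: add.assoc)
qed

sublocale vsp2 sc M Om h
  by unfold_locales (auto simp: sub Om_lin linH Om_h)

lemma opOm_comm: assumes "lin_on sc M S" "\<And>y. y \<in> M \<Longrightarrow> S (Om y) = Om (S y)" "x \<in> M"
  shows "S (op_poly sc p Om x) = op_poly sc p Om (S x)"
  by (rule op_poly_comm[OF Om_lin assms(1) sub assms(3)]) (use assms(2) in auto)

lemma e_opb: "x \<in> M \<Longrightarrow> e (ob P x) = ob (pcompose P [:-1,1:]) (e x)"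
proof (induction P)
  case 0 then show ?case using lin_zero[OF linE sub] by simp
next
  case (pCons a P)
  define y where "y = ob P x"
  have y: "y \<in> M" using pCons opb_in by (simp add: y_def)
  define z where "z = ob (pcompose P [:-1,1:]) (e x)"
  have z: "z \<in> M" using pCons opb_in e_in by (simp add: z_def)
  have "e (ob (pCons a P) x) = op_poly sc a Om (e x) + (h (e y) - e y)"
    using pCons y by (simp add: opb_pCons e_add opW_in e_h h_in y_def opOm_comm[OF linE Om_e])
  also have "\<dots> = ob (pcompose (pCons a P) [:-1,1:]) (e x)"
    using pCons z e_in by (simp add: pcompose_pCons opb_add opb_mult y_def z_def[symmetric]
        opb_pCons opb_const sc_m1 scale_one opb_in opb_diff)
  finally show ?case .
qed

lemma f_opb: "x \<in> M \<Longrightarrow> f (ob P x) = ob (pcompose P [:1,1:]) (f x)"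
proof (induction P)
  case 0 then show ?case using lin_zero[OF linF sub] by simp
next
  case (pCons a P)
  define y where "y = ob P x"
  have y: "y \<in> M" using pCons opb_in by (simp add: y_def)
  define z where "z = ob (pcompose P [:1,1:]) (f x)"
  have z: "z \<in> M" using pCons opb_in f_in by (simp add: z_def)
  have "f (ob (pCons a P) x) = op_poly sc a Om (f x) + (h (f y) + f y)"
    using pCons y by (simp add: opb_pCons f_add opW_in f_h h_in y_def opOm_comm[OF linF Om_f])
  also have "\<dots> = ob (pcompose (pCons a P) [:1,1:]) (f x)"
    using pCons z f_in by (simp add: pcompose_pCons opb_add opb_mult y_def z_def[symmetric]
        opb_pCons opb_const scale_one opb_in algebra_simps)
  finally show ?case .
qed


lemma ZV_ideal: "is_ideal (ZV u sc M e f h)"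
  unfolding is_ideal_def ZV_def
  by (auto simp: op_poly_add op_poly_mult[OF Om_lin sub] op_poly_zero[OF Om_lin sub])

lemma span_lemma: assumes v: "v \<in> M" and ev: "e v = sc \<eta> v" and eta: "\<eta> \<noteq> 0"
  shows "submod_gen sc e f h v \<subseteq> range (\<lambda>P. ob P v)"
proof -
  define S where "S = range (\<lambda>P. ob P v)"
  define Fv where "Fv = smult [:1/(2*\<eta>):] ([:[:0,1:]:] - map_poly (\<lambda>a. [:a:]) U)"
  have Omv: "Om v = sc (2*\<eta>) (f v) + op_poly sc U h v"
    using v by (simp add: omega_op_def ev f_sc scale_scale)
  have opx: "op_poly sc [:0,1:] Om v = Om v"
    using v by (simp add: op_poly_pCons[OF Om_lin sub] scale_one)
  have fv: "f v = ob Fv v"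
    using v eta by (simp add: Fv_def opb_smult_c opb_diff opb_const opx opb_lift Omv scale_scale f_in)
  have sc_ob: "sc c (ob P v) = ob (smult [:c:] P) v" for c P using opb_smult_c[OF v] by simp
  have "subspace S"
  proof (rule subspaceI)
    show "0 \<in> S" unfolding S_def by (rule range_eqI[of _ _ 0]) simp
    show "x + y \<in> S" if xS: "x \<in> S" and yS: "y \<in> S" for x y
    proof -
      obtain P Q where "x = ob P v" "y = ob Q v" using xS yS unfolding S_def by blast
      then have "x + y = ob (P + Q) v" using v by (simp add: opb_add)
      then show ?thesis unfolding S_def by blast
    qed
    show "sc c x \<in> S" if "x \<in> S" for c x
      using that unfolding S_def by (auto simp: sc_ob)
  qed
  moreover have "v \<in> S" unfolding S_def using opb_1[OF v] by (metis rangeI)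
  moreover have "\<forall>x\<in>S. e x \<in> S \<and> f x \<in> S \<and> h x \<in> S"
  proof
    fix x assume "x \<in> S"
    then obtain P where x: "x = ob P v" unfolding S_def by blast
    have "e x = ob (pcompose P [:-1,1:] * [:[:\<eta>:]:]) v"
      using v by (simp add: x e_opb ev opb_sc opb_smult_c)
    moreover have "f x = ob (pcompose P [:1,1:] * Fv) v"
      using v by (simp add: x f_opb fv opb_mult)
    moreover have "h x = ob (pCons 0 P) v"
      using v by (simp add: x opb_pCons0)
    ultimately show "e x \<in> S \<and> f x \<in> S \<and> h x \<in> S" unfolding S_def by auto
  qed
  ultimately show ?thesis unfolding submod_gen_def S_def by blast
qed

end

context vsp begin

lemma submod_gen_sub: "subspace (submod_gen sc e f h v)"
  unfolding submod_gen_def by (rule subspace_Inter) blast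

lemma submod_gen_v: "v \<in> submod_gen sc e f h v"
  unfolding submod_gen_def by blast

lemma submod_gen_closed: "x \<in> submod_gen sc e f h v \<Longrightarrow> e x \<in> submod_gen sc e f h v \<and> f x \<in> submod_gen sc e f h v \<and> h x \<in> submod_gen sc e f h v"
  unfolding submod_gen_def by blast

lemma submod_gen_least: "subspace N \<Longrightarrow> v \<in> N \<Longrightarrow> (\<And>x. x \<in> N \<Longrightarrow> e x \<in> N \<and> f x \<in> N \<and> h x \<in> N) \<Longrightarrow> submod_gen sc e f h v \<subseteq> N"
  unfolding submod_gen_def by blast

end

context rmod begin

lemma K0: assumes v: "v \<in> M" and gen: "M = submod_gen sc e f h v"
  and c: "op_poly sc c Om v = 0"
  shows "c \<in> ZV u sc M e f h"
proof -
  define N where "N = {x \<in> M. op_poly sc c Om x = 0}"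
  have lin: "lin_on sc M (op_poly sc c Om)" by (rule op_poly_lin[OF Om_lin sub])
  have "subspace N"
    unfolding N_def using lin sub lin_zero[OF lin sub]
    by (intro subspaceI) (auto simp: lin_on_def subspace_add subspace_scale subspace_0)
  moreover have "v \<in> N" using v c by (simp add: N_def)
  moreover have "e x \<in> N \<and> f x \<in> N \<and> h x \<in> N" if "x \<in> N" for x
    using that lin_zero[OF linE sub] lin_zero[OF linF sub] lin_zero[OF linH sub]
      opOm_comm[OF linE Om_e, of x c] opOm_comm[OF linF Om_f, of x c] opOm_comm[OF linH Om_h, of x c]
    by (auto simp: N_def e_in f_in h_in)
  ultimately have "submod_gen sc e f h v \<subseteq> N" by (rule submod_gen_least)
  then show ?thesis using gen by (auto simp: N_def ZV_def)
qed

lemma K3: assumes v: "v \<in> M" and gen: "M = submod_gen sc e f h v"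
  and ev: "e v = sc \<eta> v" and eta: "\<eta> \<noteq> 0"
  shows "ob P v = 0 \<Longrightarrow> coeff P k \<in> ZV u sc M e f h"
proof -
  define Z where "Z = ZV u sc M e f h"
  have I: "is_ideal Z" unfolding Z_def by (rule ZV_ideal)
  have "\<forall>P. degree P = n \<longrightarrow> ob P v = 0 \<longrightarrow> (\<forall>k. coeff P k \<in> Z)" for n
  proof (induction n rule: less_induct)
    case (less n)
    show ?case
    proof (intro allI impI)
      fix P k assume dP: "degree P = n" and P0: "ob P v = 0"
      show "coeff P k \<in> Z"
      proof (cases n)
        case 0
        then have Pc: "P = [:coeff P 0:]" using dP degree_0_id by metis
        then have "op_poly sc (coeff P 0) Om v = 0" using P0 opb_const by metis
        then have "coeff P 0 \<in> Z" unfolding Z_def by (rule K0[OF v gen])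
        then show ?thesis using I dP 0 by (cases k) (auto simp: is_ideal_def coeff_eq_0)
      next
        case (Suc m)
        define L where "L = ([:-1, 1:] :: complex poly poly)"
        define Q where "Q = pcompose P L - P"
        have "e (ob P v) = sc \<eta> (ob (pcompose P L) v)"
          using v by (simp add: e_opb ev L_def opb_sc)
        then have "sc \<eta> (ob (pcompose P L) v) = 0" using P0 lin_zero[OF linE sub] by simp
        then have "sc (1/\<eta>) (sc \<eta> (ob (pcompose P L) v)) = 0" by (metis scale_zero_right)
        moreover have "sc (1/\<eta>) (sc \<eta> (ob (pcompose P L) v)) = ob (pcompose P L) v"
          using eta by (simp only: scale_scale) (simp add: scale_one)
        ultimately have "ob (pcompose P L) v = 0" using eta by simp
        then have Q0: "ob Q v = 0" using P0 v by (simp add: Q_def opb_diff)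
        have dQ: "degree Q \<le> m" and cQ: "coeff Q m = - (of_nat (Suc m) * lead_coeff P)"
          using shift_poly_fact[of P m] dP Suc by (simp_all add: Q_def L_def)
        have "coeff Q m \<in> Z" using less.IH[of "degree Q"] dQ Q0 Suc by auto
        then have "[:- 1 / of_nat (Suc m):] * coeff Q m \<in> Z" using I unfolding is_ideal_def by blast
        moreover have "[:- 1 / of_nat (Suc m):] * coeff Q m = lead_coeff P"
          by (simp add: cQ of_nat_poly del: of_nat_Suc)
        ultimately have lc: "lead_coeff P \<in> Z" by simp
        define P' where "P' = P - monom (lead_coeff P) (Suc m)"
        have "op_poly sc (lead_coeff P) Om v = 0" using lc v by (simp add: Z_def ZV_def)
        then have "ob P' v = 0" using P0 v by (simp add: P'_def opb_diff opb_monom Tp_zero lin_zero[OF linH sub])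
        moreover have "degree P' \<le> m"
        proof (rule degree_le, intro allI impI)
          fix i assume "m < i"
          then show "coeff P' i = 0" using dP Suc
            by (cases "i = Suc m") (auto simp: P'_def coeff_monom coeff_eq_0)
        qed
        ultimately have "coeff P' k \<in> Z" using less.IH[of "degree P'"] Suc by auto
        moreover have "coeff P k = coeff P' k + coeff (monom (lead_coeff P) (Suc m)) k"
          by (simp add: P'_def)
        moreover have "coeff (monom (lead_coeff P) (Suc m)) k \<in> Z"
          using lc I by (simp add: coeff_monom is_ideal_def)
        ultimately show ?thesis using I by (simp add: is_ideal_def)
      qed
    qed
  qed
  then show "ob P v = 0 \<Longrightarrow> coeff P k \<in> ZV u sc M e f h" by (simp add: Z_def)
qed

lemma K2: "(\<And>k. coeff P k \<in> ZV u sc M e f h) \<Longrightarrow> v \<in> M \<Longrightarrow> ob P v = 0"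
  by (rule opb_zero_coeffs) (simp add: ZV_def)

end


lemma rmodI: "R_module fp sc M e f h \<Longrightarrow> fp = smult (1/2) (pcompose u [:1,1:] - u) \<Longrightarrow> rmod sc fp u M e f h"
  unfolding rmod_def rmod_axioms_def vsp_def by (auto simp: R_module_def)

definition scP :: "(complex \<Rightarrow> 'a::ab_group_add \<Rightarrow> 'a) \<Rightarrow> (complex \<Rightarrow> 'b::ab_group_add \<Rightarrow> 'b) \<Rightarrow> complex \<Rightarrow> 'a \<times> 'b \<Rightarrow> 'a \<times> 'b" where
  "scP s1 s2 c z = (s1 c (fst z), s2 c (snd z))"

lemma vs_prod: "vector_space s1 \<Longrightarrow> vector_space s2 \<Longrightarrow> vector_space (scP s1 s2)"
  unfolding vector_space_def scP_def by auto

lemma funpow_map_prod: fixes T1 :: "'a \<Rightarrow> 'a" and T2 :: "'b \<Rightarrow> 'b"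
  shows "(map_prod T1 T2 ^^ i) z = ((T1 ^^ i) (fst z), (T2 ^^ i) (snd z))"
  by (induction i arbitrary: z) auto

lemma op_poly_prod: "op_poly (scP s1 s2) p (map_prod T1 T2) z = (op_poly s1 p T1 (fst z), op_poly s2 p T2 (snd z))"
  unfolding op_poly_def by (rule prod_eqI) (simp_all add: fst_sum snd_sum scP_def funpow_map_prod)

lemma omega_prod: "omega_op u (scP s1 s2) (map_prod e1 e2) (map_prod f1 f2) (map_prod h1 h2)
   = map_prod (omega_op u s1 e1 f1 h1) (omega_op u s2 e2 f2 h2)"
proof (rule ext)
  fix z :: "'a \<times> 'b"
  show "omega_op u (scP s1 s2) (map_prod e1 e2) (map_prod f1 f2) (map_prod h1 h2) z =
    map_prod (omega_op u s1 e1 f1 h1) (omega_op u s2 e2 f2 h2) z"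
    by (cases z) (simp add: omega_op_def op_poly_prod scP_def)
qed

lemma opb_prod: "opb (scP s1 s2) (map_prod W1 W2) (map_prod T1 T2) P z = (opb s1 W1 T1 P (fst z), opb s2 W2 T2 P (snd z))"
  unfolding opb_def by (rule prod_eqI) (simp_all add: fst_sum snd_sum op_poly_prod funpow_map_prod)

lemma lin_prod: "lin_on s1 M1 T1 \<Longrightarrow> lin_on s2 M2 T2 \<Longrightarrow> lin_on (scP s1 s2) (M1 \<times> M2) (map_prod T1 T2)"
  unfolding lin_on_def scP_def by auto

lemma sub_prod: "vector_space s1 \<Longrightarrow> vector_space s2 \<Longrightarrow> module.subspace s1 M1 \<Longrightarrow> module.subspace s2 M2 \<Longrightarrow> module.subspace (scP s1 s2) (M1 \<times> M2)"
  using vs_prod[of s1 s2] unfolding module_iff_vector_space[symmetric]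
  by (auto simp: module.subspace_def scP_def zero_prod_def)

lemma R_module_prod: "R_module fp s1 M1 e1 f1 h1 \<Longrightarrow> R_module fp s2 M2 e2 f2 h2 \<Longrightarrow>
   R_module fp (scP s1 s2) (M1 \<times> M2) (map_prod e1 e2) (map_prod f1 f2) (map_prod h1 h2)"
  unfolding R_module_def using vs_prod sub_prod lin_prod
  by (simp add: op_poly_prod) blast


lemma iso_op_poly:
  assumes vs1: "vector_space s1" and vs2: "vector_space s2"
    and S1: "module.subspace s1 M1" and S2: "module.subspace s2 M2"
    and L1: "lin_on s1 M1 T1" and L2: "lin_on s2 M2 T2"
    and phM: "\<And>x. x \<in> M1 \<Longrightarrow> \<phi> x \<in> M2"
    and phadd: "\<And>x y. x \<in> M1 \<Longrightarrow> y \<in> M1 \<Longrightarrow> \<phi> (x + y) = \<phi> x + \<phi> y"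
    and phsc: "\<And>c x. x \<in> M1 \<Longrightarrow> \<phi> (s1 c x) = s2 c (\<phi> x)"
    and phT: "\<And>x. x \<in> M1 \<Longrightarrow> \<phi> (T1 x) = T2 (\<phi> x)"
    and x: "x \<in> M1"
  shows "\<phi> (op_poly s1 p T1 x) = op_poly s2 p T2 (\<phi> x)"
proof -
  interpret a: vsp s1 by (simp add: vsp_def vs1)
  interpret b: vsp s2 by (simp add: vsp_def vs2)
  have ph0: "\<phi> 0 = 0" using phadd[of 0 0] a.subspace_0[OF S1] by simp
  show ?thesis
  proof (induction p)
    case 0 then show ?case using ph0 by simp
  next
    case (pCons c p)
    have i: "op_poly s1 p T1 x \<in> M1" by (rule a.op_poly_in'[OF L1 S1 x])
    have j: "T1 (op_poly s1 p T1 x) \<in> M1" using i L1 unfolding lin_on_def by blast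
    show ?case
      using pCons a.op_poly_pCons[OF L1 S1 x] b.op_poly_pCons[OF L2 S2 phM[OF x]]
      by (simp add: phadd[OF a.subspace_scale[OF S1 x] j] phsc[OF x] phT[OF i])
  qed
qed

lemma ZV_of_iso:
  assumes R1: "R_module fp s1 M1 e1 f1 h1" and R2: "R_module fp s2 M2 e2 f2 h2"
    and fpu: "fp = smult (1/2) (pcompose u [:1,1:] - u)"
    and iso: "R_iso s1 M1 e1 f1 h1 s2 M2 e2 f2 h2"
  shows "ZV u s1 M1 e1 f1 h1 = ZV u s2 M2 e2 f2 h2"
proof -
  interpret r1: rmod s1 fp u M1 e1 f1 h1 by (rule rmodI[OF R1 fpu])
  interpret r2: rmod s2 fp u M2 e2 f2 h2 by (rule rmodI[OF R2 fpu])
  obtain \<phi> where A: "bij_betw \<phi> M1 M2 \<and> (\<forall>x\<in>M1. \<forall>y\<in>M1. \<phi> (x + y) = \<phi> x + \<phi> y)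
     \<and> (\<forall>c. \<forall>x\<in>M1. \<phi> (s1 c x) = s2 c (\<phi> x))
     \<and> (\<forall>x\<in>M1. \<phi> (e1 x) = e2 (\<phi> x) \<and> \<phi> (f1 x) = f2 (\<phi> x) \<and> \<phi> (h1 x) = h2 (\<phi> x))"
    using iso unfolding R_iso_def by (elim exE) (rule that)
  have bij: "bij_betw \<phi> M1 M2" using A by (rule conjunct1)
  have phadd: "\<And>x y. x \<in> M1 \<Longrightarrow> y \<in> M1 \<Longrightarrow> \<phi> (x + y) = \<phi> x + \<phi> y" using A by simp
  have phsc: "\<And>c x. x \<in> M1 \<Longrightarrow> \<phi> (s1 c x) = s2 c (\<phi> x)" using A by simp
  have phe: "\<And>x. x \<in> M1 \<Longrightarrow> \<phi> (e1 x) = e2 (\<phi> x)" using A by simp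
  have phf: "\<And>x. x \<in> M1 \<Longrightarrow> \<phi> (f1 x) = f2 (\<phi> x)" using A by simp
  have phh: "\<And>x. x \<in> M1 \<Longrightarrow> \<phi> (h1 x) = h2 (\<phi> x)" using A by simp
  have phM: "\<And>x. x \<in> M1 \<Longrightarrow> \<phi> x \<in> M2" using bij_betw_apply[OF bij] .
  have vs1: "vector_space s1" by (rule r1.vector_space_axioms)
  have vs2: "vector_space s2" by (rule r2.vector_space_axioms)
  have ph0: "\<phi> 0 = 0" using phadd[of 0 0] r1.subspace_0[OF r1.sub] by simp
  have oph: "\<phi> (op_poly s1 p h1 x) = op_poly s2 p h2 (\<phi> x)" if "x \<in> M1" for x p
    using iso_op_poly[of s1 s2 M1 M2 h1 h2 \<phi> x p] vs1 vs2 r1.sub r2.sub r1.linH r2.linH phM phadd phsc phh that by blast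
  have phOm: "\<phi> (r1.Om x) = r2.Om (\<phi> x)" if x: "x \<in> M1" for x
  proof -
    have a: "s1 2 (f1 (e1 x)) \<in> M1" using x r1.subspace_scale[OF r1.sub] r1.f_in r1.e_in by blast
    have b: "op_poly s1 (pcompose u [:1,1:]) h1 x \<in> M1" using x r1.oph_in by blast
    show ?thesis unfolding omega_op_def phadd[OF a b] oph[OF x] phsc[OF r1.f_in[OF r1.e_in[OF x]]]
      phf[OF r1.e_in[OF x]] phe[OF x] ..
  qed
  have opO: "\<phi> (op_poly s1 p r1.Om x) = op_poly s2 p r2.Om (\<phi> x)" if "x \<in> M1" for x p
    using iso_op_poly[of s1 s2 M1 M2 r1.Om r2.Om \<phi> x p] vs1 vs2 r1.sub r2.sub r1.Om_lin r2.Om_lin phM phadd phsc phOm that by blast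
  show ?thesis
  proof (intro set_eqI iffI)
    fix p assume p: "p \<in> ZV u s1 M1 e1 f1 h1"
    show "p \<in> ZV u s2 M2 e2 f2 h2" unfolding ZV_def
    proof (intro CollectI ballI)
      fix y assume y: "y \<in> M2"
      then obtain x where x: "x \<in> M1" "y = \<phi> x" using bij by (metis bij_betw_imp_surj_on imageE)
      show "op_poly s2 p r2.Om y = 0" using p x opO[of x p] ph0 by (simp add: ZV_def)
    qed
  next
    fix p assume p: "p \<in> ZV u s2 M2 e2 f2 h2"
    show "p \<in> ZV u s1 M1 e1 f1 h1" unfolding ZV_def
    proof (intro CollectI ballI)
      fix x assume x: "x \<in> M1"
      have "\<phi> (op_poly s1 p r1.Om x) = \<phi> 0" using p x opO[of x p] ph0 phM[OF x] by (simp add: ZV_def)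
      moreover have "op_poly s1 p r1.Om x \<in> M1" using x r1.opW_in by blast
      ultimately show "op_poly s1 p r1.Om x = 0"
        using bij r1.subspace_0[OF r1.sub] unfolding bij_betw_def inj_on_def by blast
    qed
  qed
qed


lemma iso_of_ZV:
  assumes W1: "whittaker fp \<eta> s1 M1 e1 f1 h1" and W2: "whittaker fp \<eta> s2 M2 e2 f2 h2"
    and eta: "\<eta> \<noteq> 0" and fpu: "fp = smult (1/2) (pcompose u [:1,1:] - u)"
    and Z: "ZV u s1 M1 e1 f1 h1 = ZV u s2 M2 e2 f2 h2"
  shows "R_iso s1 M1 e1 f1 h1 s2 M2 e2 f2 h2"
proof -
  obtain v1 where v1: "v1 \<in> M1" "e1 v1 = s1 \<eta> v1" "M1 = submod_gen s1 e1 f1 h1 v1"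
    and R1: "R_module fp s1 M1 e1 f1 h1" using W1 unfolding whittaker_def by blast
  obtain v2 where v2: "v2 \<in> M2" "e2 v2 = s2 \<eta> v2" "M2 = submod_gen s2 e2 f2 h2 v2"
    and R2: "R_module fp s2 M2 e2 f2 h2" using W2 unfolding whittaker_def by blast
  interpret r1: rmod s1 fp u M1 e1 f1 h1 by (rule rmodI[OF R1 fpu])
  interpret r2: rmod s2 fp u M2 e2 f2 h2 by (rule rmodI[OF R2 fpu])
  define sP where "sP = scP s1 s2"
  define eP where "eP = map_prod e1 e2"
  define fP where "fP = map_prod f1 f2"
  define hP where "hP = map_prod h1 h2"
  have RP: "R_module fp sP (M1 \<times> M2) eP fP hP"
    unfolding sP_def eP_def fP_def hP_def by (rule R_module_prod[OF R1 R2])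
  interpret rP: rmod sP fp u "M1 \<times> M2" eP fP hP by (rule rmodI[OF RP fpu])
  define G where "G = submod_gen sP eP fP hP (v1, v2)"
  have GS: "rP.subspace G" unfolding G_def by (rule rP.submod_gen_sub)
  have vP: "(v1, v2) \<in> M1 \<times> M2" using v1 v2 by simp
  have evP: "eP (v1, v2) = sP \<eta> (v1, v2)" using v1 v2 by (simp add: eP_def sP_def scP_def)
  have obP: "opb sP (omega_op u sP eP fP hP) hP P (v1, v2) = (r1.ob P v1, r2.ob P v2)" for P
    unfolding sP_def eP_def fP_def hP_def omega_prod opb_prod by simp
  have Gspan: "G \<subseteq> range (\<lambda>P. (r1.ob P v1, r2.ob P v2))"
    using rP.span_lemma[OF vP evP eta] unfolding G_def obP .
  have key: "y = 0" if xyG: "(x, y) \<in> G" and x0: "x = 0" for x y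
  proof -
    obtain P where P: "x = r1.ob P v1" "y = r2.ob P v2" using Gspan xyG by blast
    have "coeff P k \<in> ZV u s1 M1 e1 f1 h1" for k
      using r1.K3[OF v1(1) v1(3) v1(2) eta] P x0 by blast
    then show ?thesis using r2.K2[of P v2] v2(1) Z P(2) by simp
  qed
  have key': "x = 0" if xyG: "(x, y) \<in> G" and y0: "y = 0" for x y
  proof -
    obtain P where P: "x = r1.ob P v1" "y = r2.ob P v2" using Gspan xyG by blast
    have "coeff P k \<in> ZV u s2 M2 e2 f2 h2" for k
      using r2.K3[OF v2(1) v2(3) v2(2) eta] P y0 by blast
    then show ?thesis using r1.K2[of P v1] v1(1) Z P(1) by simp
  qed
  have GM: "G \<subseteq> M1 \<times> M2"
    unfolding G_def
  proof (rule rP.submod_gen_least[OF rP.sub vP])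
    fix z assume "z \<in> M1 \<times> M2"
    then show "eP z \<in> M1 \<times> M2 \<and> fP z \<in> M1 \<times> M2 \<and> hP z \<in> M1 \<times> M2"
      using rP.e_in rP.f_in rP.h_in by blast
  qed
  have Gcl: "eP z \<in> G \<and> fP z \<in> G \<and> hP z \<in> G" if "z \<in> G" for z
    using rP.submod_gen_closed[of z eP fP hP "(v1, v2)"] that unfolding G_def by blast
  have G0: "(0, 0) \<in> G" using rP.subspace_0[OF GS] by (simp add: zero_prod_def)
  have Gadd: "(x + x', y + y') \<in> G" if "(x, y) \<in> G" "(x', y') \<in> G" for x y x' y'
    using rP.subspace_add[OF GS that] by simp
  have Gdiff: "(x - x', y - y') \<in> G" if "(x, y) \<in> G" "(x', y') \<in> G" for x y x' y'
    using rP.subspace_diff[OF GS that] by simp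
  have Gsc: "(s1 c x, s2 c y) \<in> G" if "(x, y) \<in> G" for x y c
    using rP.subspace_scale[OF GS that, of c] by (simp add: sP_def scP_def)
  have Gfst: "M1 \<subseteq> fst ` G"
  proof -
    have "submod_gen s1 e1 f1 h1 v1 \<subseteq> fst ` G"
    proof (rule r1.submod_gen_least)
      show "r1.subspace (fst ` G)"
      proof (rule r1.subspaceI)
        show "0 \<in> fst ` G" using G0 by force
        show "x + y \<in> fst ` G" if "x \<in> fst ` G" "y \<in> fst ` G" for x y
          using that Gadd by force
        show "s1 c x \<in> fst ` G" if "x \<in> fst ` G" for c x
          using that Gsc by force
      qed
      show "v1 \<in> fst ` G" using rP.submod_gen_v[of "(v1,v2)" eP fP hP] unfolding G_def by force
      fix x assume "x \<in> fst ` G"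
      then obtain y where xy: "(x, y) \<in> G" by force
      then show "e1 x \<in> fst ` G \<and> f1 x \<in> fst ` G \<and> h1 x \<in> fst ` G"
        using Gcl[OF xy] by (force simp: eP_def fP_def hP_def)
    qed
    then show ?thesis using v1(3) by simp
  qed
  have Gsnd: "M2 \<subseteq> snd ` G"
  proof -
    have "submod_gen s2 e2 f2 h2 v2 \<subseteq> snd ` G"
    proof (rule r2.submod_gen_least)
      show "r2.subspace (snd ` G)"
      proof (rule r2.subspaceI)
        show "0 \<in> snd ` G" using G0 by force
        show "x + y \<in> snd ` G" if "x \<in> snd ` G" "y \<in> snd ` G" for x y
          using that Gadd by force
        show "s2 c x \<in> snd ` G" if "x \<in> snd ` G" for c x
          using that Gsc by force
      qed
      show "v2 \<in> snd ` G" using rP.submod_gen_v[of "(v1,v2)" eP fP hP] unfolding G_def by force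
      fix y assume "y \<in> snd ` G"
      then obtain x where xy: "(x, y) \<in> G" by force
      then show "e2 y \<in> snd ` G \<and> f2 y \<in> snd ` G \<and> h2 y \<in> snd ` G"
        using Gcl[OF xy] by (force simp: eP_def fP_def hP_def)
    qed
    then show ?thesis using v2(3) by simp
  qed
  have uniq: "y = y'" if "(x, y) \<in> G" "(x, y') \<in> G" for x y y'
    using key[OF Gdiff[OF that]] by simp
  have uniq': "x = x'" if "(x, y) \<in> G" "(x', y) \<in> G" for x x' y
    using key'[OF Gdiff[OF that]] by simp
  define \<phi> where "\<phi> x = (THE y. (x, y) \<in> G)" for x
  have phG: "(x, \<phi> x) \<in> G" if xM: "x \<in> M1" for x
  proof -
    obtain y where "(x, y) \<in> G" using Gfst xM by force
    then have "\<exists>!y. (x, y) \<in> G" using uniq by blast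
    then show ?thesis unfolding \<phi>_def by (rule theI')
  qed
  have pheq: "\<phi> x = y" if "(x, y) \<in> G" for x y
    unfolding \<phi>_def using that uniq by blast
  have bij: "bij_betw \<phi> M1 M2"
  proof (rule bij_betwI')
    show "(\<phi> x = \<phi> y) = (x = y)" if "x \<in> M1" "y \<in> M1" for x y
      using uniq'[of x "\<phi> x" y] phG that by auto
    show "\<phi> x \<in> M2" if "x \<in> M1" for x using phG[OF that] GM by blast
    show "\<exists>x\<in>M1. y = \<phi> x" if yM: "y \<in> M2" for y
    proof -
      obtain x where xy: "(x, y) \<in> G" using Gsnd yM by force
      then show ?thesis using GM pheq[OF xy] by blast
    qed
  qed
  show ?thesis unfolding R_iso_def
  proof (intro exI conjI ballI allI)
    show "bij_betw \<phi> M1 M2" by (rule bij)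
    show "\<phi> (x + y) = \<phi> x + \<phi> y" if "x \<in> M1" "y \<in> M1" for x y
      by (rule pheq[OF Gadd[OF phG phG]]) (use that in auto)
    show "\<phi> (s1 c x) = s2 c (\<phi> x)" if "x \<in> M1" for c x
      by (rule pheq[OF Gsc[OF phG]]) (use that in auto)
    show "\<phi> (e1 x) = e2 (\<phi> x)" if "x \<in> M1" for x
      using Gcl[OF phG[OF that]] by (intro pheq) (simp add: eP_def)
    show "\<phi> (f1 x) = f2 (\<phi> x)" if "x \<in> M1" for x
      using Gcl[OF phG[OF that]] by (intro pheq) (simp add: fP_def)
    show "\<phi> (h1 x) = h2 (\<phi> x)" if "x \<in> M1" for x
      using Gcl[OF phG[OF that]] by (intro pheq) (simp add: hP_def)
  qed
qed




definition redm :: "complex poly \<Rightarrow> complex poly poly \<Rightarrow> complex poly poly" where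
  "redm g P = map_poly (\<lambda>c. c mod g) P"

definition lift :: "complex poly \<Rightarrow> complex poly poly" where
  "lift p = map_poly (\<lambda>a. [:a:]) p"

lemma coeff_redm: "coeff (redm g P) k = coeff P k mod g"
  by (simp add: redm_def coeff_map_poly)

lemma coeff_lift: "coeff (lift p) k = [:coeff p k:]"
  by (simp add: lift_def coeff_map_poly)

lemma redm_add: "redm g (P + Q) = redm g P + redm g Q"
  by (rule poly_eqI) (simp add: coeff_redm poly_mod_add_left)

lemma redm_diff: "redm g (P - Q) = redm g P - redm g Q"
  by (rule poly_eqI) (simp add: coeff_redm poly_mod_diff_left)

lemma redm_0[simp]: "redm g 0 = 0"
  by (simp add: redm_def)

lemma redm_smult_c: "redm g (smult [:c:] P) = smult [:c:] (redm g P)"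
  by (rule poly_eqI) (simp add: coeff_redm mod_smult_left)

lemma redm_idem[simp]: "redm g (redm g P) = redm g P"
  by (rule poly_eqI) (simp add: coeff_redm)

lemma redm_pCons: "redm g (pCons a P) = pCons (a mod g) (redm g P)"
  by (simp add: redm_def map_poly_pCons)

lemma redm_const: "redm g [:a:] = [:a mod g:]"
  by (simp add: redm_pCons)

lemma redm_mult: "redm g (P * Q) = redm g (redm g P * Q)"
proof (rule poly_eqI)
  fix n
  have "(\<Sum>i\<le>n. coeff P i * coeff Q (n - i)) mod g = (\<Sum>i\<le>n. (coeff P i * coeff Q (n - i)) mod g) mod g"
    by (rule mod_sum_eq[symmetric])
  also have "\<dots> = (\<Sum>i\<le>n. ((coeff P i mod g) * coeff Q (n - i)) mod g) mod g"
    by (simp only: mod_mult_left_eq)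
  also have "\<dots> = (\<Sum>i\<le>n. (coeff P i mod g) * coeff Q (n - i)) mod g"
    by (rule mod_sum_eq)
  finally show "coeff (redm g (P * Q)) n = coeff (redm g (redm g P * Q)) n"
    by (simp add: coeff_redm coeff_mult)
qed

lemma redm_mult2: "redm g (P * Q) = redm g (P * redm g Q)"
  using redm_mult[of g Q P] by (simp add: mult.commute)

lemma redm_pcomp: "redm g (pcompose P L) = redm g (pcompose (redm g P) L)"
proof (induction P)
  case 0 then show ?case by simp
next
  case (pCons a P)
  have m: "redm g (L * pcompose P L) = redm g (L * pcompose (redm g P) L)"
    by (metis pCons.IH redm_mult2)
  have "redm g (pcompose (pCons a P) L) = [:a mod g:] + redm g (L * pcompose P L)"
    by (simp only: pcompose_pCons redm_add redm_const)
  also have "\<dots> = [:a mod g mod g:] + redm g (L * pcompose (redm g P) L)"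
    by (simp add: m)
  also have "\<dots> = redm g (pcompose (redm g (pCons a P)) L)"
    by (simp only: redm_pCons pcompose_pCons redm_add redm_const redm_0)
  finally show ?case .
qed

lemma redm_pcomp_mult: "redm g (pcompose (redm g X * Y) L) = redm g (pcompose (X * Y) L)"
  by (metis redm_mult redm_pcomp)

lemma lift_pCons: "lift (pCons a p) = pCons [:a:] (lift p)"
  by (simp add: lift_def map_poly_pCons)

lemma lift_0[simp]: "lift 0 = 0"
  by (simp add: lift_def)

lemma lift_add: "lift (p + q) = lift p + lift q"
  by (rule poly_eqI) (simp add: coeff_lift)

lemma lift_diff: "lift (p - q) = lift p - lift q"
  by (rule poly_eqI) (simp add: coeff_lift)

lemma lift_smult: "lift (smult c p) = smult [:c:] (lift p)"
  by (rule poly_eqI) (simp add: coeff_lift)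

lemma lift_mult: "lift (p * q) = lift p * lift q"
  by (induction p) (simp_all add: lift_pCons lift_add lift_smult)

lemma lift_pcompose: "lift (pcompose p q) = pcompose (lift p) (lift q)"
  by (induction p) (simp_all add: lift_pCons lift_add lift_mult pcompose_pCons)


definition scM :: "complex \<Rightarrow> complex poly poly \<Rightarrow> complex poly poly" where
  "scM c P = smult [:c:] P"
definition MM :: "complex poly \<Rightarrow> complex poly poly set" where
  "MM g = {P. redm g P = P}"
definition hM :: "complex poly \<Rightarrow> complex poly poly \<Rightarrow> complex poly poly" where
  "hM g P = redm g (pCons 0 P)"
definition eM :: "complex poly \<Rightarrow> complex \<Rightarrow> complex poly poly \<Rightarrow> complex poly poly" where
  "eM g \<eta> P = redm g (smult [:\<eta>:] (pcompose P [:-1, 1:]))"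
definition Fv0 :: "complex poly \<Rightarrow> complex poly poly" where
  "Fv0 u = [:[:0, 1:]:] - lift u"
definition fM :: "complex poly \<Rightarrow> complex \<Rightarrow> complex poly \<Rightarrow> complex poly poly \<Rightarrow> complex poly poly" where
  "fM g \<eta> u P = redm g (smult [:1 / (2 * \<eta>):] (pcompose (P * Fv0 u) [:1, 1:]))"
definition vM :: "complex poly \<Rightarrow> complex poly poly" where
  "vM g = redm g 1"

lemma vs_scM: "vector_space scM"
  unfolding vector_space_def scM_def
proof (intro conjI allI)
  show "smult [:a + b:] x = smult [:a:] x + smult [:b:] x" for a b x
    by (simp add: smult_add_left[symmetric])
  show "smult [:a:] (smult [:b:] x) = smult [:a * b:] x" for a b x
    by (simp add: mult.commute)
  show "smult [:1:] x = x" for x :: "complex poly poly" using smult_1_left[of x] by (simp only: one_pCons)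
qed (simp add: smult_add_right)

lemma smult_comm: "smult a (smult b X) = smult b (smult a X)"
  by (simp add: mult.commute)

interpretation mv: vsp scM by (simp add: vsp_def vs_scM)

lemma MM_iff: "P \<in> MM g \<longleftrightarrow> redm g P = P" by (simp add: MM_def)
lemma redm_in: "redm g P \<in> MM g" by (simp add: MM_def)

lemma sub_MM: "mv.subspace (MM g)"
  by (rule mv.subspaceI) (auto simp: MM_def scM_def redm_add redm_smult_c)

lemma lin_red: assumes "\<And>P Q. A (P + Q) = A P + A Q" "\<And>c P. A (smult [:c:] P) = smult [:c:] (A P)"
  shows "lin_on scM (MM g) (\<lambda>P. redm g (A P))"
  unfolding lin_on_def using assms by (simp add: redm_in redm_add scM_def redm_smult_c)

lemma hM_eq: "hM g = (\<lambda>P. redm g (pCons 0 P))" by (rule ext) (simp add: hM_def)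
lemma eM_eq: "eM g \<eta> = (\<lambda>P. redm g (smult [:\<eta>:] (pcompose P [:-1, 1:])))" by (rule ext) (simp add: eM_def)
lemma fM_eq: "fM g \<eta> u = (\<lambda>P. redm g (smult [:1 / (2 * \<eta>):] (pcompose (P * Fv0 u) [:1, 1:])))" by (rule ext) (simp add: fM_def)

lemma lin_hM: "lin_on scM (MM g) (hM g)"
  unfolding hM_eq by (rule lin_red) simp_all
lemma lin_eM: "lin_on scM (MM g) (eM g \<eta>)"
  unfolding eM_eq by (rule lin_red) (simp_all add: pcompose_add pcompose_smult smult_add_right mult.commute)
lemma lin_fM: "lin_on scM (MM g) (fM g \<eta> u)"
  unfolding fM_eq by (rule lin_red) (simp_all add: pcompose_add pcompose_smult smult_add_right distrib_right smult_comm[of "[:1 / (2 * \<eta>):]"])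

lemma hM_red: "hM g (redm g X) = hM g X" by (simp add: hM_def redm_pCons)
lemma eM_red: "eM g \<eta> (redm g X) = eM g \<eta> X"
  by (simp add: eM_def redm_smult_c redm_pcomp[of g X])
lemma fM_red: "fM g \<eta> u (redm g X) = fM g \<eta> u X"
  by (simp add: fM_def redm_smult_c redm_pcomp_mult)
lemma eM_alt: "eM g \<eta> X = smult [:\<eta>:] (redm g (pcompose X [:-1, 1:]))"
  by (simp add: eM_def redm_smult_c)
lemma fM_alt: "fM g \<eta> u X = smult [:1 / (2 * \<eta>):] (redm g (pcompose (X * Fv0 u) [:1, 1:]))"
  by (simp add: fM_def redm_smult_c)
lemma eM_sm: "eM g \<eta> (smult [:a:] X) = smult [:a:] (eM g \<eta> X)"
  by (simp add: eM_alt pcompose_smult redm_smult_c mult.commute)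
lemma fM_sm: "fM g \<eta> u (smult [:a:] X) = smult [:a:] (fM g \<eta> u X)"
  by (simp add: fM_alt pcompose_smult redm_smult_c mult.commute)

lemma Lp_Lm: "pcompose [:1, 1:] [:-1, 1::complex poly:] = [:0, 1:]"
  by (simp add: pcompose_pCons)
lemma Lm_Lp: "pcompose [:-1, 1:] [:1, 1::complex poly:] = [:0, 1:]"
  by (simp add: pcompose_pCons)

lemma Fv0_shift: "pcompose (Fv0 u) [:1, 1:] = [:[:0, 1:]:] - lift (pcompose u [:1, 1:])"
proof -
  have "lift [:1, 1:] = [:1, 1:]" by (simp add: lift_pCons)
  then show ?thesis by (simp add: Fv0_def pcompose_diff lift_pcompose)
qed

lemma H_op: "P \<in> MM g \<Longrightarrow> op_poly scM p (hM g) P = redm g (lift p * P)"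
proof (induction p)
  case 0 then show ?case by simp
next
  case (pCons a p)
  have "op_poly scM (pCons a p) (hM g) P = scM a P + hM g (op_poly scM p (hM g) P)"
    by (rule mv.op_poly_pCons[OF lin_hM sub_MM pCons.prems])
  also have "\<dots> = smult [:a:] P + hM g (redm g (lift p * P))"
    by (simp only: pCons.IH[OF pCons.prems] scM_def)
  also have "\<dots> = redm g (lift (pCons a p) * P)"
    using pCons.prems by (simp add: hM_def redm_pCons lift_pCons redm_add redm_smult_c MM_iff)
  finally show ?case .
qed

lemma Lm_mult: "[:-1, 1:] * X = pCons 0 X - (X :: complex poly poly)"
  by (simp add: mult_pCons_left)
lemma Lp_mult: "[:1, 1:] * X = pCons 0 X + (X :: complex poly poly)"
  by (simp add: mult_pCons_left)
lemma redm_pCons0: "redm g (pCons 0 X) = pCons 0 (redm g X)"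
  by (simp add: redm_pCons)

lemma rel2_M: "hM g (eM g \<eta> P) - eM g \<eta> (hM g P) = eM g \<eta> P"
proof -
  define X where "X = pcompose P [:-1, 1:]"
  have "hM g (eM g \<eta> P) = pCons 0 (smult [:\<eta>:] (redm g X))"
    by (simp add: hM_def eM_alt X_def redm_pCons0 redm_smult_c)
  moreover have "eM g \<eta> (hM g P) = smult [:\<eta>:] (pCons 0 (redm g X) - redm g X)"
    unfolding hM_def eM_red by (simp add: eM_alt pcompose_pCons X_def[symmetric] Lm_mult redm_diff redm_pCons0)
  ultimately show ?thesis by (simp add: eM_alt X_def smult_diff_right)
qed

lemma rel3_M: "hM g (fM g \<eta> u P) - fM g \<eta> u (hM g P) = - fM g \<eta> u P"
proof -
  define Y where "Y = pcompose (P * Fv0 u) [:1, 1:]"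
  have "hM g (fM g \<eta> u P) = pCons 0 (smult [:1 / (2 * \<eta>):] (redm g Y))"
    by (simp add: hM_def fM_alt Y_def redm_pCons0 redm_smult_c)
  moreover have "fM g \<eta> u (hM g P) = smult [:1 / (2 * \<eta>):] (pCons 0 (redm g Y) + redm g Y)"
  proof -
    have "pCons 0 P * Fv0 u = pCons 0 (P * Fv0 u)" by (simp add: mult_pCons_left)
    then show ?thesis
      unfolding hM_def fM_red by (simp add: fM_alt pcompose_pCons Y_def[symmetric] Lp_mult redm_add redm_pCons0 add.commute)
  qed
  ultimately show ?thesis by (simp add: fM_alt Y_def smult_add_right)
qed

lemma rel1_M: assumes eta: "\<eta> \<noteq> 0"
  shows "eM g \<eta> (fM g \<eta> u P) - fM g \<eta> u (eM g \<eta> P) = redm g (lift (smult (1/2) (pcompose u [:1,1:] - u)) * P)"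
proof -
  define c where "c = 1 / (2 * \<eta>)"
  have F: "Fv0 u - pcompose (Fv0 u) [:1, 1:] = lift (pcompose u [:1,1:] - u)"
    by (simp add: Fv0_shift lift_diff) (simp add: Fv0_def)
  have "eM g \<eta> (fM g \<eta> u P) = smult [:c:] (smult [:\<eta>:] (redm g (P * Fv0 u)))"
    unfolding c_def fM_alt eM_sm eM_red
    by (simp add: eM_alt pcompose_assoc[symmetric] Lp_Lm)
  moreover have "fM g \<eta> u (eM g \<eta> P) = smult [:\<eta>:] (smult [:c:] (redm g (P * pcompose (Fv0 u) [:1, 1:])))"
    unfolding c_def eM_alt fM_sm fM_red
    by (simp add: fM_alt pcompose_mult pcompose_assoc[symmetric] Lm_Lp)
  moreover have "smult [:c:] (smult [:\<eta>:] X) = smult [:1/2:] X" for X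
    using eta by (simp add: c_def)
  moreover have "smult [:c * \<eta>:] X = smult [:1/2:] X" "smult [:\<eta> * c:] X = smult [:1/2:] X" for X
    using eta by (simp_all add: c_def)
  ultimately have "eM g \<eta> (fM g \<eta> u P) - fM g \<eta> u (eM g \<eta> P)
      = smult [:1/2:] (redm g (P * Fv0 u) - redm g (P * pcompose (Fv0 u) [:1, 1:]))"
    by (simp add: smult_diff_right smult_comm[of "[:\<eta>:]"])
  also have "\<dots> = smult [:1/2:] (redm g (P * lift (pcompose u [:1,1:] - u)))"
    by (simp add: redm_diff[symmetric] right_diff_distrib[symmetric] F)
  also have "\<dots> = redm g (lift (smult (1/2) (pcompose u [:1,1:] - u)) * P)"
    by (simp add: lift_smult redm_smult_c mult.commute)
  finally show ?thesis .
qed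

lemma fMeM: "fM g \<eta> u (eM g \<eta> P) = smult [:\<eta>:] (smult [:1 / (2 * \<eta>):] (redm g (P * pcompose (Fv0 u) [:1, 1:])))"
  unfolding eM_alt fM_sm fM_red
  by (simp add: fM_alt pcompose_mult pcompose_assoc[symmetric] Lm_Lp)

lemma R_module_M: assumes "\<eta> \<noteq> 0"
  shows "R_module (smult (1/2) (pcompose u [:1,1:] - u)) scM (MM g) (eM g \<eta>) (fM g \<eta> u) (hM g)"
  unfolding R_module_def
  using vs_scM sub_MM lin_eM lin_fM lin_hM rel1_M[OF assms] rel2_M rel3_M H_op by simp

lemma redm_smult_red: "redm g (smult q (redm g X)) = redm g (smult q X)"
  by (rule poly_eqI) (simp add: coeff_redm mod_mult_right_eq)

lemma redm_sum: "redm g (\<Sum>i\<in>A. F i) = (\<Sum>i\<in>A. redm g (F i))"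
  by (induction A rule: infinite_finite_induct) (simp_all add: redm_add)

locale model =
  fixes g :: "complex poly" and \<eta> :: complex and u :: "complex poly"
  assumes eta: "\<eta> \<noteq> 0"
begin

abbreviation "fpm \<equiv> smult (1/2) (pcompose u [:1,1:] - u)"

sublocale rm: rmod scM fpm u "MM g" "eM g \<eta>" "fM g \<eta> u" "hM g"
  by (rule rmodI[OF R_module_M[OF eta] refl])

lemma Om_M: "P \<in> MM g \<Longrightarrow> rm.Om P = redm g ([:[:0, 1:]:] * P)"
proof -
  assume P: "P \<in> MM g"
  have "rm.Om P = smult [:2:] (smult [:\<eta>:] (smult [:1 / (2 * \<eta>):] (redm g (P * pcompose (Fv0 u) [:1, 1:]))))
       + redm g (lift (pcompose u [:1,1:]) * P)"
    by (simp add: omega_op_def scM_def fMeM H_op[OF P])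
  also have "smult [:2:] (smult [:\<eta>:] (smult [:1 / (2 * \<eta>):] X)) = X" for X
    using eta by (simp add: one_pCons[symmetric])
  finally show ?thesis
    by (simp add: redm_add[symmetric] Fv0_shift right_diff_distrib mult.commute)
qed

lemma Op_M: "P \<in> MM g \<Longrightarrow> op_poly scM p rm.Om P = redm g ([:p:] * P)"
proof (induction p)
  case 0 then show ?case by simp
next
  case (pCons a p)
  have "op_poly scM (pCons a p) rm.Om P = scM a P + rm.Om (op_poly scM p rm.Om P)"
    by (rule mv.op_poly_pCons[OF rm.Om_lin sub_MM pCons.prems])
  also have "\<dots> = smult [:a:] P + redm g ([:[:0, 1:]:] * redm g ([:p:] * P))"
    by (simp only: pCons.IH[OF pCons.prems] scM_def Om_M[OF redm_in])
  also have "\<dots> = redm g ([:pCons a p:] * P)"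
  proof -
    have e: "smult (pCons a p) P = smult [:a:] P + smult [:0,1:] (smult p P)"
      by (simp add: smult_add_left[symmetric])
    show ?thesis using pCons.prems
      by (simp add: e redm_add redm_smult_c redm_smult_red MM_iff)
  qed
  finally show ?case .
qed

lemma vM_in: "vM g \<in> MM g" by (simp add: vM_def redm_in)

lemma eM_vM: "eM g \<eta> (vM g) = scM \<eta> (vM g)"
  unfolding vM_def eM_red by (simp add: eM_alt scM_def pcompose_1)

lemma gen_M: "MM g = submod_gen scM (eM g \<eta>) (fM g \<eta> u) (hM g) (vM g)"
proof
  show "submod_gen scM (eM g \<eta>) (fM g \<eta> u) (hM g) (vM g) \<subseteq> MM g"
    by (rule mv.submod_gen_least[OF sub_MM vM_in]) (simp add: rm.e_in rm.f_in rm.h_in)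
  define S where "S = submod_gen scM (eM g \<eta>) (fM g \<eta> u) (hM g) (vM g)"
  have Ssub: "mv.subspace S" unfolding S_def by (rule mv.submod_gen_sub)
  have Scl: "eM g \<eta> x \<in> S \<and> fM g \<eta> u x \<in> S \<and> hM g x \<in> S" if "x \<in> S" for x
    using that unfolding S_def by (rule mv.submod_gen_closed)
  have SM: "S \<subseteq> MM g"
    unfolding S_def by (rule mv.submod_gen_least[OF sub_MM vM_in]) (simp add: rm.e_in rm.f_in rm.h_in)
  have hp: "(hM g ^^ k) (vM g) = redm g (monom 1 k)" for k
    by (induction k) (simp_all add: vM_def monom_0 one_pCons hM_red hM_def monom_Suc redm_pCons0)
  have hpS: "(hM g ^^ k) (vM g) \<in> S" for k
    by (induction k) (use Scl mv.submod_gen_v in \<open>auto simp: S_def\<close>)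
  have OmS: "rm.Om x \<in> S" if "x \<in> S" for x
    unfolding omega_op_def using that Scl
    by (intro mv.subspace_add[OF Ssub] mv.subspace_scale[OF Ssub] mv.op_poly_in[OF Ssub]) auto
  have monS: "redm g (monom c k) \<in> S" for c k
  proof -
    have "op_poly scM c rm.Om ((hM g ^^ k) (vM g)) \<in> S"
      by (rule mv.op_poly_in[OF Ssub OmS hpS])
    moreover have "op_poly scM c rm.Om ((hM g ^^ k) (vM g)) = redm g (monom c k)"
      using hp[of k] Op_M[OF redm_in, of c "monom 1 k"]
      by (simp add: redm_smult_red smult_monom)
    ultimately show ?thesis by simp
  qed
  show "MM g \<subseteq> S"
  proof
    fix P assume P: "P \<in> MM g"
    have "P = redm g (\<Sum>i\<le>degree P. monom (coeff P i) i)"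
      using P by (simp add: poly_as_sum_of_monoms MM_iff)
    also have "\<dots> = (\<Sum>i\<le>degree P. redm g (monom (coeff P i) i))" by (rule redm_sum)
    also have "\<dots> \<in> S" by (rule mv.subspace_sum[OF Ssub]) (rule monS)
    finally show "P \<in> S" .
  qed
qed

lemma ZV_M: "ZV u scM (MM g) (eM g \<eta>) (fM g \<eta> u) (hM g) = {p. g dvd p}"
proof (intro set_eqI iffI)
  fix p assume "p \<in> ZV u scM (MM g) (eM g \<eta>) (fM g \<eta> u) (hM g)"
  then have "op_poly scM p rm.Om (vM g) = 0" using vM_in by (simp add: ZV_def)
  then have "redm g [:p:] = 0" using Op_M[OF vM_in, of p] by (simp add: vM_def redm_smult_red)
  then show "p \<in> {p. g dvd p}" by (simp add: redm_const mod_eq_0_iff_dvd)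
next
  fix p assume "p \<in> {p. g dvd p}"
  then have gp: "g dvd p" by simp
  show "p \<in> ZV u scM (MM g) (eM g \<eta>) (fM g \<eta> u) (hM g)"
    unfolding ZV_def
  proof (intro CollectI ballI)
    fix P assume P: "P \<in> MM g"
    have "redm g ([:p:] * P) = 0"
      by (rule poly_eqI) (simp add: coeff_redm gp mod_eq_0_iff_dvd)
    then show "op_poly scM p rm.Om P = 0" using Op_M[OF P] by simp
  qed
qed

lemma whittaker_M: "whittaker fpm \<eta> scM (MM g) (eM g \<eta>) (fM g \<eta> u) (hM g)"
  unfolding whittaker_def using R_module_M[OF eta] vM_in eM_vM gen_M by blast

end




definition encf :: "complex poly poly \<Rightarrow> nat \<Rightarrow> complex" where
  "encf P n = (case prod_decode n of (i, j) \<Rightarrow> coeff (coeff P i) j)"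

lemma encf_MOST: "\<forall>\<^sub>\<infinity> n. encf P n = 0"
proof -
  define K where "K = (\<Sum>i\<le>degree P. degree (coeff P i))"
  have "{n. encf P n \<noteq> 0} \<subseteq> prod_encode ` ({..degree P} \<times> {..K})"
  proof
    fix n assume n: "n \<in> {n. encf P n \<noteq> 0}"
    obtain i j where ij: "prod_decode n = (i, j)" by (cases "prod_decode n")
    have nz: "coeff (coeff P i) j \<noteq> 0" using n ij by (simp add: encf_def)
    then have ci: "coeff P i \<noteq> 0" by auto
    then have i: "i \<le> degree P" using le_degree by blast
    have "j \<le> degree (coeff P i)" using nz le_degree by blast
    also have "\<dots> \<le> K" unfolding K_def using i by (intro member_le_sum) auto
    finally have "(i, j) \<in> {..degree P} \<times> {..K}" using i by simp
    moreover have "n = prod_encode (i, j)" using ij by (metis prod_decode_inverse)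
    ultimately show "n \<in> prod_encode ` ({..degree P} \<times> {..K})" by blast
  qed
  then have "finite {n. encf P n \<noteq> 0}" by (rule finite_subset) simp
  then show ?thesis by (simp add: MOST_iff_cofinite)
qed

definition enc :: "complex poly poly \<Rightarrow> complex poly" where
  "enc P = Abs_poly (encf P)"

lemma coeff_enc: "coeff (enc P) n = encf P n"
  unfolding enc_def using encf_MOST[of P] by (simp add: Abs_poly_inverse)

lemma enc_add: "enc (P + Q) = enc P + enc Q"
  by (rule poly_eqI) (simp add: coeff_enc encf_def split: prod.splits)

lemma enc_sc: "enc (scM c P) = smult c (enc P)"
  by (rule poly_eqI) (simp add: coeff_enc encf_def scM_def split: prod.splits)

lemma enc_inj: "inj enc"
proof (rule injI)
  fix P Q assume "enc P = enc Q"
  then have "coeff (enc P) (prod_encode (i, j)) = coeff (enc Q) (prod_encode (i, j))" for i j by simp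
  then have "coeff (coeff P i) j = coeff (coeff Q i) j" for i j by (simp add: coeff_enc encf_def)
  then show "P = Q" by (intro poly_eqI) simp
qed

lemma vs_smult: "vector_space (smult :: complex \<Rightarrow> complex poly \<Rightarrow> complex poly)"
  unfolding vector_space_def by (simp add: smult_add_right smult_add_left)


interpretation sv: vsp "smult :: complex \<Rightarrow> complex poly \<Rightarrow> complex poly"
  by (simp add: vsp_def vs_smult)

lemma transport:
  fixes \<iota> :: "'v::ab_group_add \<Rightarrow> complex poly"
  assumes W: "whittaker fp \<eta> sc M e f h" and fpu: "fp = smult (1/2) (pcompose u [:1,1:] - u)"
    and add: "\<And>x y. x \<in> M \<Longrightarrow> y \<in> M \<Longrightarrow> \<iota> (x + y) = \<iota> x + \<iota> y"
    and scl: "\<And>c x. x \<in> M \<Longrightarrow> \<iota> (sc c x) = smult c (\<iota> x)"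
    and inj: "inj_on \<iota> M"
  shows "whittaker fp \<eta> smult (\<iota> ` M) (\<lambda>y. \<iota> (e (inv_into M \<iota> y))) (\<lambda>y. \<iota> (f (inv_into M \<iota> y))) (\<lambda>y. \<iota> (h (inv_into M \<iota> y)))
     \<and> ZV u smult (\<iota> ` M) (\<lambda>y. \<iota> (e (inv_into M \<iota> y))) (\<lambda>y. \<iota> (f (inv_into M \<iota> y))) (\<lambda>y. \<iota> (h (inv_into M \<iota> y)))
       = ZV u sc M e f h"
proof -
  define \<kappa> where "\<kappa> = inv_into M \<iota>"
  define e' where "e' = (\<lambda>y. \<iota> (e (\<kappa> y)))"
  define f' where "f' = (\<lambda>y. \<iota> (f (\<kappa> y)))"
  define h' where "h' = (\<lambda>y. \<iota> (h (\<kappa> y)))"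
  obtain v where v: "v \<in> M" "e v = sc \<eta> v" "M = submod_gen sc e f h v"
    and R: "R_module fp sc M e f h" using W unfolding whittaker_def by blast
  interpret r: rmod sc fp u M e f h by (rule rmodI[OF R fpu])
  have ki: "\<kappa> (\<iota> x) = x" if "x \<in> M" for x unfolding \<kappa>_def using inj that by (rule inv_into_f_f)
  have i0: "\<iota> 0 = 0" using add[of 0 0] r.subspace_0[OF r.sub] by simp
  have sub': "sv.subspace (\<iota> ` M)"
  proof (rule sv.subspaceI)
    show "0 \<in> \<iota> ` M" using i0 r.subspace_0[OF r.sub] by (metis imageI)
    show "x + y \<in> \<iota> ` M" if xy: "x \<in> \<iota> ` M" "y \<in> \<iota> ` M" for x y
    proof -
      obtain a b where ab: "a \<in> M" "b \<in> M" "x = \<iota> a" "y = \<iota> b" using xy by blast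
      then have "x + y = \<iota> (a + b)" using add by simp
      then show ?thesis using r.subspace_add[OF r.sub ab(1,2)] by blast
    qed
    show "smult c x \<in> \<iota> ` M" if xy: "x \<in> \<iota> ` M" for c x
    proof -
      obtain a where ab: "a \<in> M" "x = \<iota> a" using xy by blast
      then have "smult c x = \<iota> (sc c a)" using scl by simp
      then show ?thesis using r.subspace_scale[OF r.sub ab(1)] by blast
    qed
  qed
  have linT: "lin_on smult (\<iota> ` M) (\<lambda>y. \<iota> (T (\<kappa> y)))" if T: "lin_on sc M T" for T
  proof -
    have TM: "T x \<in> M" if "x \<in> M" for x using T that unfolding lin_on_def by blast
    have Ta: "T (x + y) = T x + T y" if "x \<in> M" "y \<in> M" for x y using T that unfolding lin_on_def by blast
    have Ts: "T (sc c x) = sc c (T x)" if "x \<in> M" for c x using T that unfolding lin_on_def by blast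
    show ?thesis unfolding lin_on_def
    proof (intro conjI ballI allI)
      fix y assume "y \<in> \<iota> ` M"
      then obtain x where x: "x \<in> M" "y = \<iota> x" by blast
      show "\<iota> (T (\<kappa> y)) \<in> \<iota> ` M" using x ki TM by simp
      fix c
      have "smult c y = \<iota> (sc c x)" using scl x by simp
      then have kc: "\<kappa> (smult c y) = sc c x" using ki[OF r.subspace_scale[OF r.sub x(1)]] by simp
      show "\<iota> (T (\<kappa> (smult c y))) = smult c (\<iota> (T (\<kappa> y)))"
        unfolding kc using x by (simp add: ki Ts scl TM)
    next
      fix y y' assume "y \<in> \<iota> ` M" "y' \<in> \<iota> ` M"
      then obtain x x' where x: "x \<in> M" "y = \<iota> x" "x' \<in> M" "y' = \<iota> x'" by blast
      have "y + y' = \<iota> (x + x')" using add x by simp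
      then have ka: "\<kappa> (y + y') = x + x'" using ki[OF r.subspace_add[OF r.sub x(1) x(3)]] by simp
      show "\<iota> (T (\<kappa> (y + y'))) = \<iota> (T (\<kappa> y)) + \<iota> (T (\<kappa> y'))"
        unfolding ka using x by (simp add: ki Ta add TM)
    qed
  qed
  have le: "lin_on smult (\<iota> ` M) e'" unfolding e'_def by (rule linT[OF r.linE])
  have lf: "lin_on smult (\<iota> ` M) f'" unfolding f'_def by (rule linT[OF r.linF])
  have lh: "lin_on smult (\<iota> ` M) h'" unfolding h'_def by (rule linT[OF r.linH])
  have e'i: "e' (\<iota> x) = \<iota> (e x)" if "x \<in> M" for x using ki that by (simp add: e'_def)
  have f'i: "f' (\<iota> x) = \<iota> (f x)" if "x \<in> M" for x using ki that by (simp add: f'_def)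
  have h'i: "h' (\<iota> x) = \<iota> (h x)" if "x \<in> M" for x using ki that by (simp add: h'_def)
  have idiff: "\<iota> (x - y) = \<iota> x - \<iota> y" if "x \<in> M" "y \<in> M" for x y
  proof -
    have "\<iota> x = \<iota> (x - y) + \<iota> y" using add[OF r.subspace_diff[OF r.sub that] that(2)] by simp
    then show ?thesis by (metis add_diff_cancel_right')
  qed
  have ineg: "\<iota> (- x) = - \<iota> x" if "x \<in> M" for x
    using idiff[of 0 x] that r.subspace_0[OF r.sub] i0 by simp
  have oph: "\<iota> (op_poly sc p h x) = op_poly smult p h' (\<iota> x)" if "x \<in> M" for p x
  proof -
    have phM: "\<And>x. x \<in> M \<Longrightarrow> \<iota> x \<in> \<iota> ` M" by blast
    show ?thesis
      by (rule iso_op_poly[of sc smult M "\<iota> ` M" h h' \<iota> x p, OF r.vector_space_axioms vs_smult r.sub sub' r.linH lh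
        phM add scl h'i[symmetric] that])
  qed
  have R': "R_module fp smult (\<iota> ` M) e' f' h'"
    unfolding R_module_def
  proof (intro conjI ballI)
    show "vector_space (smult :: complex \<Rightarrow> complex poly \<Rightarrow> complex poly)" by (rule vs_smult)
    show "sv.subspace (\<iota> ` M)" by (rule sub')
    show "lin_on smult (\<iota> ` M) e'" "lin_on smult (\<iota> ` M) f'" "lin_on smult (\<iota> ` M) h'" by fact+
  next
    fix y assume "y \<in> \<iota> ` M"
    then obtain x where x: "x \<in> M" "y = \<iota> x" by blast
    show "e' (f' y) - f' (e' y) = op_poly smult fp h' y"
      using x r.e_in r.f_in r.rel1[of x] by (simp add: e'i f'i idiff[symmetric] oph)
    show "h' (e' y) - e' (h' y) = e' y"
      using x r.e_in r.h_in r.rel2[of x] by (simp add: e'i h'i idiff[symmetric])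
    show "h' (f' y) - f' (h' y) = - f' y"
      using x r.f_in r.h_in r.rel3[of x] by (simp add: f'i h'i idiff[symmetric] ineg[symmetric])
  qed
  have gen: "\<iota> ` M = submod_gen smult e' f' h' (\<iota> v)"
  proof
    define S where "S = submod_gen smult e' f' h' (\<iota> v)"
    have Ssub: "sv.subspace S" unfolding S_def by (rule sv.submod_gen_sub)
    define N0 where "N0 = {x \<in> M. \<iota> x \<in> S}"
    have "submod_gen sc e f h v \<subseteq> N0"
    proof (rule r.submod_gen_least)
      show "r.subspace N0"
      proof (rule r.subspaceI)
        show "0 \<in> N0" using r.subspace_0[OF r.sub] sv.subspace_0[OF Ssub] i0 by (simp add: N0_def)
        show "x + y \<in> N0" if "x \<in> N0" "y \<in> N0" for x y
          using that r.subspace_add[OF r.sub] sv.subspace_add[OF Ssub] add by (simp add: N0_def)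
        show "sc c x \<in> N0" if "x \<in> N0" for c x
          using that r.subspace_scale[OF r.sub] sv.subspace_scale[OF Ssub] scl by (simp add: N0_def)
      qed
      show "v \<in> N0" using v(1) sv.submod_gen_v[of "\<iota> v" e' f' h'] by (simp add: N0_def S_def)
      fix x assume "x \<in> N0"
      then have x: "x \<in> M" "\<iota> x \<in> S" by (auto simp: N0_def)
      then show "e x \<in> N0 \<and> f x \<in> N0 \<and> h x \<in> N0"
        using sv.submod_gen_closed[of "\<iota> x" e' f' h' "\<iota> v"] r.e_in r.f_in r.h_in e'i f'i h'i
        by (simp add: N0_def S_def)
    qed
    then show "\<iota> ` M \<subseteq> S" using v(3) by (auto simp: N0_def)
    show "S \<subseteq> \<iota> ` M" unfolding S_def
      by (rule sv.submod_gen_least[OF sub']) (use v(1) e'i f'i h'i r.e_in r.f_in r.h_in in auto)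
  qed
  have W': "whittaker fp \<eta> smult (\<iota> ` M) e' f' h'"
    unfolding whittaker_def
  proof (intro conjI bexI[of _ "\<iota> v"])
    show "R_module fp smult (\<iota> ` M) e' f' h'" by (rule R')
    show "e' (\<iota> v) = smult \<eta> (\<iota> v)" using e'i[OF v(1)] v(2) scl[OF v(1)] by simp
    show "\<iota> ` M = submod_gen smult e' f' h' (\<iota> v)" by (rule gen)
    show "\<iota> v \<in> \<iota> ` M" using v(1) by blast
  qed
  have iso: "R_iso sc M e f h smult (\<iota> ` M) e' f' h'"
    unfolding R_iso_def
  proof (intro exI[of _ \<iota>] conjI ballI allI)
    show "bij_betw \<iota> M (\<iota> ` M)" by (rule inj_on_imp_bij_betw[OF inj])
    show "\<iota> (x + y) = \<iota> x + \<iota> y" if "x \<in> M" "y \<in> M" for x y using add that by blast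
    show "\<iota> (sc c x) = smult c (\<iota> x)" if "x \<in> M" for c x using scl that by blast
    show "\<iota> (e x) = e' (\<iota> x)" if "x \<in> M" for x using e'i that by simp
    show "\<iota> (f x) = f' (\<iota> x)" if "x \<in> M" for x using f'i that by simp
    show "\<iota> (h x) = h' (\<iota> x)" if "x \<in> M" for x using h'i that by simp
  qed
  have "ZV u sc M e f h = ZV u smult (\<iota> ` M) e' f' h'"
    by (rule ZV_of_iso[OF R R' fpu iso])
  then show ?thesis using W' unfolding e'_def f'_def h'_def \<kappa>_def by simp
qed



lemma ideal_principal:
  assumes I: "is_ideal I"
  shows "\<exists>g. I = {p. g dvd p}"
proof (cases "I \<subseteq> {0}")
  case True
  then have "I = {0}" using I unfolding is_ideal_def by blast
  then show ?thesis by (intro exI[of _ 0]) auto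
next
  case False
  then have ex: "\<exists>n. \<exists>q\<in>I. q \<noteq> 0 \<and> degree q = n" by blast
  define n where "n = (LEAST n. \<exists>q\<in>I. q \<noteq> 0 \<and> degree q = n)"
  obtain g where g: "g \<in> I" "g \<noteq> 0" "degree g = n"
    using LeastI_ex[OF ex] unfolding n_def by blast
  have "I = {p. g dvd p}"
  proof (intro set_eqI iffI)
    fix p assume p: "p \<in> I"
    have "p mod g = p + (- (p div g)) * g" by (simp add: mod_div_mult_eq[symmetric] algebra_simps)
    also have "\<dots> \<in> I" using I p g(1) unfolding is_ideal_def by blast
    finally have r: "p mod g \<in> I" .
    show "p \<in> {p. g dvd p}"
    proof (rule ccontr)
      assume "p \<notin> {p. g dvd p}"
      then have nz: "p mod g \<noteq> 0" by (simp add: mod_eq_0_iff_dvd)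
      then have "degree (p mod g) < n" using degree_mod_less'[OF g(2) nz] g(3) by simp
      moreover have "n \<le> degree (p mod g)" unfolding n_def using r nz by (intro Least_le) blast
      ultimately show False by simp
    qed
  next
    fix p assume "p \<in> {p. g dvd p}"
    then obtain k where "p = k * g" by (metis dvdE mem_Collect_eq mult.commute)
    then show "p \<in> I" using I g(1) unfolding is_ideal_def by blast
  qed
  then show ?thesis by blast
qed

theorem mainTheorem2:
  fixes fp u :: "complex poly" and eta :: complex
  assumes "eta \<noteq> 0"
    and "fp = smult (1/2) (pcompose u [:1, 1:] - u)"
  shows "(\<forall>(sc1::complex \<Rightarrow> 'a::ab_group_add \<Rightarrow> 'a) M1 e1 f1 h1.
            whittaker fp eta sc1 M1 e1 f1 h1 \<longrightarrow> is_ideal (ZV u sc1 M1 e1 f1 h1))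
    \<and> (\<forall>(sc1::complex \<Rightarrow> 'a::ab_group_add \<Rightarrow> 'a) M1 e1 f1 h1
          (sc2::complex \<Rightarrow> 'b::ab_group_add \<Rightarrow> 'b) M2 e2 f2 h2.
          whittaker fp eta sc1 M1 e1 f1 h1 \<longrightarrow> whittaker fp eta sc2 M2 e2 f2 h2 \<longrightarrow>
          (R_iso sc1 M1 e1 f1 h1 sc2 M2 e2 f2 h2 \<longleftrightarrow>
           ZV u sc1 M1 e1 f1 h1 = ZV u sc2 M2 e2 f2 h2))
    \<and> (\<forall>I. is_ideal I \<longrightarrow>
          (\<exists>(M::complex poly set) e f h. whittaker fp eta smult M e f h
              \<and> ZV u smult M e f h = I))"
proof (intro conjI allI impI)
  fix sc1 :: "complex \<Rightarrow> 'a::ab_group_add \<Rightarrow> 'a" and M1 e1 f1 h1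
  assume W: "whittaker fp eta sc1 M1 e1 f1 h1"
  then have R: "R_module fp sc1 M1 e1 f1 h1" unfolding whittaker_def by blast
  interpret r: rmod sc1 fp u M1 e1 f1 h1 by (rule rmodI[OF R assms(2)])
  show "is_ideal (ZV u sc1 M1 e1 f1 h1)" by (rule r.ZV_ideal)
next
  fix sc1 :: "complex \<Rightarrow> 'a::ab_group_add \<Rightarrow> 'a" and M1 e1 f1 h1
    and sc2 :: "complex \<Rightarrow> 'b::ab_group_add \<Rightarrow> 'b" and M2 e2 f2 h2
  assume W1: "whittaker fp eta sc1 M1 e1 f1 h1" and W2: "whittaker fp eta sc2 M2 e2 f2 h2"
  have R1: "R_module fp sc1 M1 e1 f1 h1" using W1 unfolding whittaker_def by blast
  have R2: "R_module fp sc2 M2 e2 f2 h2" using W2 unfolding whittaker_def by blast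
  show "R_iso sc1 M1 e1 f1 h1 sc2 M2 e2 f2 h2 \<longleftrightarrow> ZV u sc1 M1 e1 f1 h1 = ZV u sc2 M2 e2 f2 h2"
  proof
    assume "R_iso sc1 M1 e1 f1 h1 sc2 M2 e2 f2 h2"
    then show "ZV u sc1 M1 e1 f1 h1 = ZV u sc2 M2 e2 f2 h2" by (rule ZV_of_iso[OF R1 R2 assms(2)])
  next
    assume "ZV u sc1 M1 e1 f1 h1 = ZV u sc2 M2 e2 f2 h2"
    then show "R_iso sc1 M1 e1 f1 h1 sc2 M2 e2 f2 h2" by (rule iso_of_ZV[OF W1 W2 assms(1) assms(2)])
  qed
next
  fix I assume I: "is_ideal I"
  obtain g where g: "I = {p. g dvd p}" using ideal_principal[OF I] by blast
  interpret m: model g eta u by (simp add: model_def assms(1))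
  have WM: "whittaker fp eta scM (MM g) (eM g eta) (fM g eta u) (hM g)"
    using m.whittaker_M assms(2) by simp
  have T: "whittaker fp eta smult (enc ` MM g) (\<lambda>y. enc (eM g eta (inv_into (MM g) enc y)))
        (\<lambda>y. enc (fM g eta u (inv_into (MM g) enc y))) (\<lambda>y. enc (hM g (inv_into (MM g) enc y)))
     \<and> ZV u smult (enc ` MM g) (\<lambda>y. enc (eM g eta (inv_into (MM g) enc y)))
        (\<lambda>y. enc (fM g eta u (inv_into (MM g) enc y))) (\<lambda>y. enc (hM g (inv_into (MM g) enc y)))
       = ZV u scM (MM g) (eM g eta) (fM g eta u) (hM g)"
    by (rule transport[OF WM assms(2) enc_add enc_sc inj_on_subset[OF enc_inj subset_UNIV]])
  then show "\<exists>(M::complex poly set) e f h. whittaker fp eta smult M e f h \<and> ZV u smult M e f h = I"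
    using m.ZV_M g by metis
qed

end
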